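(* Let $l\in\mathbb N$, $N_1,\ldots,N_l\in\mathbb N$ and parameters $\zeta_1,\ldots,\zeta_l$. Then the connected $\vec u$-bracket satisfies $$\langle t_{(N_1)}(\zeta_1;\cdot)\otimes\cdots\otimes t_{(N_l)}(\zeta_l;\cdot)\rangle_{\vec u}=\frac12\sum_{\alpha\in\Pi(l)}\mu(\alpha,\mathbb 1_l)\sum_{m\in\mathbb Z}u_m^{M_\alpha m}\prod_{j=1}^l(\zeta_j^m+\zeta_j^{-m}),\qquad M_\alpha:=\sum_{A\in\alpha}\max_{a\in A}N_a .$$
   Context: $\mathscr P$ is the set of partitions, $r_m(\lambda)$ the multiplicity of $m$ in $\lambda$. Formal variables $\vec u=(u_1,u_2,\dots)$, $u_\lambda=\prod_j u_{\lambda_j}$, $u_0=1$, $u_{-m}=u_m^{-1}$; $\langle f\rangle_{\vec u}:=\sum_\lambda f(\lambda)u_\lambda/\sum_\lambda u_\lambda$. $t_{(N)}(\zeta;\lambda):=1+\sum_{m\ge1}(\zeta^m+\zeta^{-m})\delta_{r_m(\lambda)\ge Nm}$ ($\delta_X=1$ if $X$ true, else $0$). $\Pi(l)$ is the set of set partitions of $[l]=\{1,\dots,l\}$, $\mathbb 1_l=\{[l]\}$; for $\alpha\le\beta$ in $\Pi(l)$ (refinement), $\mu(\alpha,\beta)=\prod_{B\in\beta}(-1)^{|\alpha_B|+1}(|\alpha_B|-1)!$ where $\alpha_B$ is the set partition of $B$ induced by $\alpha$. For $f_1,\dots,f_l$ and $A\subseteq[l]$, $f_A:=\prod_{a\in A}f_a$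 (pointwise), and the connected bracket is $\langle f_1\otimes\cdots\otimes f_l\rangle_{\vec u}:=\sum_{\alpha\in\Pi(l)}\mu(\alpha,\mathbb 1_l)\prod_{A\in\alpha}\langle f_A\rangle_{\vec u}$. *)

theory Defs
  imports "HOL-Analysis.Analysis" "HOL-Library.Multiset" "HOL-Library.FuncSet"
          "HOL-Library.Disjoint_Sets"
begin

text \<open>Formal power series in the variables u_1, u_2, ... with complex coefficients.
  A monomial prod_m u_m^(e_m) is encoded as the multiset of variable indices
  (count X m = exponent of u_m).\<close>

type_synonym ser = "nat multiset \<Rightarrow> complex"

definition mono :: "nat multiset \<Rightarrow> ser" where
  "mono X = (\<lambda>r. if r = X then 1 else 0)"

definition ssum :: "('i \<Rightarrow> ser) \<Rightarrow> 'i set \<Rightarrow> ser" where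
  "ssum F I = (\<lambda>r. \<Sum>\<^sub>\<infinity> i\<in>I. F i r)"

definition smul :: "ser \<Rightarrow> ser \<Rightarrow> ser" where
  "smul F G = (\<lambda>r. \<Sum>s\<in>{s. s \<subseteq># r}. F s * G (r - s))"

definition sprod :: "('i \<Rightarrow> ser) \<Rightarrow> 'i set \<Rightarrow> ser" where
  "sprod F I = (\<lambda>r. \<Sum>s\<in>{s \<in> I \<rightarrow>\<^sub>E {x. x \<subseteq># r}. (\<Sum>i\<in>I. s i) = r}.
                      \<Prod>i\<in>I. F i (s i))"

definition sdiv :: "ser \<Rightarrow> ser \<Rightarrow> ser" where
  "sdiv F G = (THE H. smul H G = F)"

text \<open>Partitions = finite multisets of positive integers; r_m(lam) = count lam m;
  u_lam is the monomial encoded by lam itself.\<close>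
definition partitions :: "nat multiset set" where
  "partitions = {lam. 0 \<notin># lam}"

definition ubracket :: "(nat multiset \<Rightarrow> complex) \<Rightarrow> ser" where
  "ubracket f = sdiv (ssum (\<lambda>lam. \<lambda>r. f lam * mono lam r) partitions)
                     (ssum mono partitions)"

definition t_N :: "nat \<Rightarrow> complex \<Rightarrow> nat multiset \<Rightarrow> complex" where
  "t_N N z lam = 1 + (\<Sum>\<^sub>\<infinity> m\<in>{1::nat..}. (z ^ m + inverse z ^ m) *
                       (if count lam m \<ge> N * m then 1 else 0))"

definition set_partitions :: "nat \<Rightarrow> nat set set set" where
  "set_partitions l = {\<alpha>. partition_on {1..l} \<alpha>}"

text \<open>Moebius function mu(alpha,beta) for alpha refining beta; alpha_B = blocks of alpha inside B.\<close>
definition mobius :: "nat set set \<Rightarrow> nat set set \<Rightarrow> int" where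
  "mobius \<alpha> \<beta> = (\<Prod>B\<in>\<beta>. (-1) ^ (card {A\<in>\<alpha>. A \<subseteq> B} + 1)
                             * fact (card {A\<in>\<alpha>. A \<subseteq> B} - 1))"

definition cbracket :: "nat \<Rightarrow> (nat \<Rightarrow> nat multiset \<Rightarrow> complex) \<Rightarrow> ser" where
  "cbracket l f = (\<lambda>r. \<Sum>\<alpha>\<in>set_partitions l. of_int (mobius \<alpha> {{1..l}}) *
                     sprod (\<lambda>A. ubracket (\<lambda>lam. \<Prod>a\<in>A. f a lam)) \<alpha> r)"

text \<open>Monomial u_m^e for m,e integers, with u_0 = 1 and u_{-m} = u_m^{-1}
  (only used where the resulting exponent sgn(m)*e of u_|m| is nonnegative).\<close>
definition umon :: "int \<Rightarrow> int \<Rightarrow> nat multiset" where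
  "umon m e = replicate_mset (nat (sgn m * e)) (nat \<bar>m\<bar>)"

definition Mexp :: "(nat \<Rightarrow> nat) \<Rightarrow> nat set set \<Rightarrow> nat" where
  "Mexp N \<alpha> = (\<Sum>A\<in>\<alpha>. Max (N ` A))"

end

theory Submission
  imports Defs
begin

lemma finite_submsets: "finite {s::'a multiset. s \<subseteq># r}"
proof -
  have "{s. s \<subseteq># r} \<subseteq> mset ` {ys. set ys \<subseteq> set_mset r \<and> length ys \<le> size r}"
  proof
    fix s assume "s \<in> {s. s \<subseteq># r}"
    hence s: "s \<subseteq># r" by simp
    obtain ys where "s = mset ys" by (metis ex_mset)
    moreover have "set ys \<subseteq> set_mset r" using s calculation
      by (metis mset_subset_eqD set_mset_mset subsetI)
    moreover have "length ys \<le> size r" using s calculation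
      by (metis size_mset size_mset_mono)
    ultimately show "s \<in> mset ` {ys. set ys \<subseteq> set_mset r \<and> length ys \<le> size r}" by blast
  qed
  moreover have "finite {ys. set ys \<subseteq> set_mset r \<and> length ys \<le> size r}"
    using finite_lists_length_le by blast
  ultimately show ?thesis by (rule finite_subset[OF _ finite_imageI])
qed

lemma smul_cancel:
  assumes eq: "smul H1 G = smul H2 G" and G0: "G {#} = 1"
  shows "H1 = H2"
proof
  fix r
  show "H1 r = H2 r"
  proof (induction "size r" arbitrary: r rule: less_induct)
    case less
    have split: "smul H G r = H r + (\<Sum>s\<in>{s. s \<subset># r}. H s * G (r - s))" for H
    proof -
      have "{s. s \<subseteq># r} = insert r {s. s \<subset># r}" by auto
      moreover have "r \<notin> {s. s \<subset># r}" by simp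
      moreover have "finite {s. s \<subset># r}"
        by (rule finite_subset[OF _ finite_submsets[of r]]) auto
      ultimately show ?thesis unfolding smul_def using G0 by simp
    qed
    have "(\<Sum>s\<in>{s. s \<subset># r}. H1 s * G (r - s)) = (\<Sum>s\<in>{s. s \<subset># r}. H2 s * G (r - s))"
      using less mset_subset_size by (intro sum.cong) auto
    with split[of H1] split[of H2] eq show ?case by (metis add_right_cancel)
  qed
qed

definition fam :: "('i \<Rightarrow> complex) \<Rightarrow> ('i \<Rightarrow> nat multiset) \<Rightarrow> 'i set \<Rightarrow> ser" where
  "fam c e I = (\<lambda>r. \<Sum>i\<in>{i\<in>I. e i = r}. c i)"

lemma ubracket_fam:
  assumes e0: "\<And>i. i \<in> I \<Longrightarrow> 0 \<notin># e i"
    and fin: "\<And>lam. finite {i\<in>I. e i \<subseteq># lam}"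
    and f: "\<And>lam. 0 \<notin># lam \<Longrightarrow> f lam = (\<Sum>i\<in>{i\<in>I. e i \<subseteq># lam}. c i)"
  shows "ubracket f = fam c e I"
proof -
  define G where "G = ssum mono partitions"
  define F where "F = ssum (\<lambda>lam. \<lambda>r. f lam * mono lam r) partitions"
  have Gr: "G r = (if 0 \<notin># r then 1 else 0)" for r
  proof -
    have "G r = (\<Sum>\<^sub>\<infinity>lam\<in>partitions. mono lam r)" by (simp add: G_def ssum_def)
    also have "\<dots> = (\<Sum>\<^sub>\<infinity>lam\<in>partitions \<inter> {r}. mono lam r)"
      by (intro infsum_cong_neutral) (auto simp: mono_def)
    also have "\<dots> = (if 0 \<notin># r then 1 else 0)"
      by (auto simp: partitions_def mono_def)
    finally show ?thesis .
  qed
  have Fr: "F r = (if 0 \<notin># r then f r else 0)" for r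
  proof -
    have "F r = (\<Sum>\<^sub>\<infinity>lam\<in>partitions. f lam * mono lam r)" by (simp add: F_def ssum_def)
    also have "\<dots> = (\<Sum>\<^sub>\<infinity>lam\<in>partitions \<inter> {r}. f lam * mono lam r)"
      by (intro infsum_cong_neutral) (auto simp: mono_def)
    also have "\<dots> = (if 0 \<notin># r then f r else 0)"
      by (auto simp: partitions_def mono_def)
    finally show ?thesis .
  qed
  have key: "smul (fam c e I) G = F"
  proof
    fix r
    have finI: "finite {i\<in>I. e i \<subseteq># r}" by (rule fin)
    have "smul (fam c e I) G r = (\<Sum>s\<in>{s. s \<subseteq># r}. (\<Sum>i\<in>{i\<in>I. e i = s}. c i) * G (r - s))"
      by (simp add: smul_def fam_def)
    also have "\<dots> = (\<Sum>s\<in>{s. s \<subseteq># r}. (\<Sum>i\<in>{i\<in>{i\<in>I. e i \<subseteq># r}. e i = s}. c i * G (r - e i)))"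
      by (intro sum.cong refl) (auto simp: sum_distrib_right intro!: sum.cong)
    also have "\<dots> = (\<Sum>i\<in>{i\<in>I. e i \<subseteq># r}. c i * G (r - e i))"
      by (rule sum.group[OF finI finite_submsets]) auto
    also have "\<dots> = F r"
    proof (cases "0 \<in># r")
      case True
      have "G (r - e i) = 0" if "i \<in> {i\<in>I. e i \<subseteq># r}" for i
      proof -
        have "count (e i) 0 = 0" using e0 that by (simp add: count_eq_zero_iff)
        hence "0 \<in># r - e i" using True by (simp add: in_diff_count)
        thus ?thesis by (simp add: Gr)
      qed
      thus ?thesis using True by (simp add: Fr)
    next
      case False
      have "G (r - e i) = 1" if "i \<in> {i\<in>I. e i \<subseteq># r}" for i
        using False by (simp add: Gr) (meson in_diffD)
      thus ?thesis using False by (simp add: Fr f)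
    qed
    finally show "smul (fam c e I) G r = F r" .
  qed
  have G0: "G {#} = 1" by (simp add: Gr)
  have "sdiv F G = fam c e I"
    unfolding sdiv_def
  proof (rule the_equality)
    show "smul (fam c e I) G = F" by (rule key)
    fix H assume "smul H G = F"
    with key G0 show "H = fam c e I" using smul_cancel by metis
  qed
  thus ?thesis by (simp add: ubracket_def F_def G_def)
qed


lemma sum_mset_le_count:
  assumes "finite S" "x \<in> S"
  shows "count (f x) y \<le> count (\<Sum>i\<in>S. f i) y"
  using assms by (auto simp: count_sum intro!: member_le_sum)

lemma sum_mset_sub:
  assumes "finite S" "x \<in> S"
  shows "f x \<subseteq># (\<Sum>i\<in>S. f i)"
  using sum_mset_le_count[OF assms, of f] by (auto simp: subseteq_mset_def)

lemma sprod_fam: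
  fixes c :: "'a \<Rightarrow> 'i \<Rightarrow> complex"
  assumes finA: "finite \<alpha>"
    and fib: "\<And>A x. A \<in> \<alpha> \<Longrightarrow> finite {i\<in>I A. e A i = x}"
  shows "sprod (\<lambda>A. fam (c A) (e A) (I A)) \<alpha> r =
     (\<Sum>m\<in>{m\<in>PiE \<alpha> I. (\<Sum>A\<in>\<alpha>. e A (m A)) = r}. \<Prod>A\<in>\<alpha>. c A (m A))"
proof -
  define S where "S = {s \<in> \<alpha> \<rightarrow>\<^sub>E {x. x \<subseteq># r}. (\<Sum>i\<in>\<alpha>. s i) = r}"
  define T where "T = {m\<in>PiE \<alpha> I. (\<Sum>A\<in>\<alpha>. e A (m A)) = r}"
  define g where "g = (\<lambda>m. \<lambda>A\<in>\<alpha>. e A (m A))"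
  have finS: "finite S" unfolding S_def
    by (rule finite_subset[of _ "PiE \<alpha> (\<lambda>_. {x. x \<subseteq># r})"]) (auto intro!: finite_PiE finA finite_submsets)
  have TS: "T \<subseteq> PiE \<alpha> (\<lambda>A. \<Union>x\<in>{x. x \<subseteq># r}. {i\<in>I A. e A i = x})"
  proof
    fix m assume "m \<in> T"
    hence m: "m \<in> PiE \<alpha> I" "(\<Sum>A\<in>\<alpha>. e A (m A)) = r" by (auto simp: T_def)
    show "m \<in> PiE \<alpha> (\<lambda>A. \<Union>x\<in>{x. x \<subseteq># r}. {i\<in>I A. e A i = x})"
      using m sum_mset_sub[OF finA, of _ "\<lambda>A. e A (m A)"] by (auto simp: PiE_iff)
  qed
  have finT: "finite T"
    by (rule finite_subset[OF TS]) (intro finite_PiE finA finite_UN_I finite_submsets fib)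
  have gT: "g ` T \<subseteq> S"
    using sum_mset_sub[OF finA] by (auto simp: g_def T_def S_def PiE_iff)
  have "sprod (\<lambda>A. fam (c A) (e A) (I A)) \<alpha> r = (\<Sum>s\<in>S. \<Prod>A\<in>\<alpha>. \<Sum>i\<in>{i\<in>I A. e A i = s A}. c A i)"
    by (simp add: sprod_def fam_def S_def)
  also have "\<dots> = (\<Sum>s\<in>S. \<Sum>m\<in>PiE \<alpha> (\<lambda>A. {i\<in>I A. e A i = s A}). \<Prod>A\<in>\<alpha>. c A (m A))"
    by (intro sum.cong refl prod_sum_PiE finA fib)
  also have "\<dots> = (\<Sum>s\<in>S. \<Sum>m\<in>{m\<in>T. g m = s}. \<Prod>A\<in>\<alpha>. c A (m A))"
  proof (intro sum.cong refl)
    fix s assume s: "s \<in> S"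
    show "PiE \<alpha> (\<lambda>A. {i\<in>I A. e A i = s A}) = {m\<in>T. g m = s}"
    proof (intro set_eqI iffI)
      fix m assume m: "m \<in> PiE \<alpha> (\<lambda>A. {i\<in>I A. e A i = s A})"
      have "g m = s" using m s by (auto simp: g_def S_def PiE_iff extensional_def)
      moreover have "(\<Sum>A\<in>\<alpha>. e A (m A)) = r" using m s
        by (auto simp: S_def PiE_iff intro!: trans[OF sum.cong[OF refl]])
      ultimately show "m \<in> {m\<in>T. g m = s}" using m by (auto simp: T_def PiE_iff)
    next
      fix m assume "m \<in> {m\<in>T. g m = s}"
      thus "m \<in> PiE \<alpha> (\<lambda>A. {i\<in>I A. e A i = s A})"
        by (auto simp: T_def g_def PiE_iff)
    qed
  qed
  also have "\<dots> = (\<Sum>m\<in>T. \<Prod>A\<in>\<alpha>. c A (m A))"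
    by (rule sum.group[OF finT finS gT])
  finally show ?thesis by (simp add: T_def)
qed


definition Cm :: "(nat \<Rightarrow> nat) \<Rightarrow> nat set \<Rightarrow> (nat \<Rightarrow> int) \<Rightarrow> nat multiset" where
  "Cm N A m = (\<Sum>k\<in>(\<lambda>a. nat \<bar>m a\<bar>) ` A.
      replicate_mset (Max ((\<lambda>a. N a * k) ` {a\<in>A. nat \<bar>m a\<bar> = k})) k)"

lemma count_Cm:
  assumes "finite A"
  shows "count (Cm N A m) x = (if x \<in> (\<lambda>a. nat \<bar>m a\<bar>) ` A
     then Max ((\<lambda>a. N a * x) ` {a\<in>A. nat \<bar>m a\<bar> = x}) else 0)"
proof -
  have "count (Cm N A m) x = (\<Sum>k\<in>(\<lambda>a. nat \<bar>m a\<bar>) ` A.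
      (if k = x then Max ((\<lambda>a. N a * k) ` {a\<in>A. nat \<bar>m a\<bar> = k}) else 0))"
    unfolding Cm_def count_sum by (intro sum.cong) auto
  also have "\<dots> = (if x \<in> (\<lambda>a. nat \<bar>m a\<bar>) ` A
     then Max ((\<lambda>a. N a * x) ` {a\<in>A. nat \<bar>m a\<bar> = x}) else 0)" using assms by (simp add: sum.delta)
  finally show ?thesis .
qed

lemma Cm_sub:
  assumes "finite A"
  shows "Cm N A m \<subseteq># lam \<longleftrightarrow> (\<forall>a\<in>A. N a * nat \<bar>m a\<bar> \<le> count lam (nat \<bar>m a\<bar>))"
proof
  assume h: "Cm N A m \<subseteq># lam"
  show "\<forall>a\<in>A. N a * nat \<bar>m a\<bar> \<le> count lam (nat \<bar>m a\<bar>)"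
  proof
    fix a assume a: "a \<in> A"
    let ?x = "nat \<bar>m a\<bar>"
    have "N a * ?x \<le> Max ((\<lambda>a. N a * ?x) ` {b\<in>A. nat \<bar>m b\<bar> = ?x})"
      using a assms by (intro Max_ge) auto
    also have "\<dots> = count (Cm N A m) ?x" using a assms by (simp add: count_Cm)
    also have "\<dots> \<le> count lam ?x" using h by (simp add: subseteq_mset_def)
    finally show "N a * ?x \<le> count lam ?x" .
  qed
next
  assume h: "\<forall>a\<in>A. N a * nat \<bar>m a\<bar> \<le> count lam (nat \<bar>m a\<bar>)"
  show "Cm N A m \<subseteq># lam" unfolding subseteq_mset_def
  proof
    fix x
    show "count (Cm N A m) x \<le> count lam x"
    proof (cases "x \<in> (\<lambda>a. nat \<bar>m a\<bar>) ` A")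
      case True
      then obtain a where a: "a \<in> A" "x = nat \<bar>m a\<bar>" by auto
      have "Max ((\<lambda>a. N a * x) ` {a\<in>A. nat \<bar>m a\<bar> = x}) \<le> count lam x"
        using assms h a by (subst Max_le_iff) auto
      thus ?thesis using True assms by (simp add: count_Cm)
    qed (simp add: count_Cm assms)
  qed
qed

lemma Cm_0: "finite A \<Longrightarrow> 0 \<notin># Cm N A m"
  by (simp add: count_Cm flip: count_eq_zero_iff) (auto intro: Max_eqI)

lemma Cm_cong: "(\<And>a. a \<in> A \<Longrightarrow> m a = m' a) \<Longrightarrow> Cm N A m = Cm N A m'"
  unfolding Cm_def by (intro sum.cong image_cong refl arg_cong2[where f=replicate_mset]
       arg_cong[where f=Max]) auto

definition Kset :: "nat multiset \<Rightarrow> int set" where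
  "Kset lam = {k. k = 0 \<or> nat \<bar>k\<bar> \<in># lam}"

lemma Kset_eq: "Kset lam = insert 0 (int ` (set_mset lam - {0}) \<union> (\<lambda>m. - int m) ` (set_mset lam - {0}))"
proof (intro set_eqI iffI)
  fix k assume "k \<in> Kset lam"
  thus "k \<in> insert 0 (int ` (set_mset lam - {0}) \<union> (\<lambda>m. - int m) ` (set_mset lam - {0}))"
  proof (cases "k = 0")
    case False
    hence k: "nat \<bar>k\<bar> \<in> set_mset lam - {0}" using \<open>k \<in> Kset lam\<close> by (auto simp: Kset_def)
    show ?thesis
    proof (cases "k > 0")
      case True
      hence "k = int (nat \<bar>k\<bar>)" by simp
      thus ?thesis using k by blast
    next
      case False
      hence "k = - int (nat \<bar>k\<bar>)" by simp
      thus ?thesis using k by blast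
    qed
  qed simp
qed (auto simp: Kset_def)

lemma finite_Kset: "finite (Kset lam)"
  by (simp add: Kset_eq)

lemma t_N_sum:
  assumes N: "N \<ge> 1"
  shows "t_N N z lam = (\<Sum>k\<in>Kset lam. if N * nat \<bar>k\<bar> \<le> count lam (nat \<bar>k\<bar>) then z powi k else 0)"
proof -
  define S where "S = set_mset lam - {0}"
  define c where "c = (\<lambda>m::nat. N * m \<le> count lam m)"
  have inf: "(\<Sum>\<^sub>\<infinity> m\<in>{1::nat..}. (z ^ m + inverse z ^ m) * (if count lam m \<ge> N * m then 1 else 0))
        = (\<Sum>m\<in>S. (if c m then z ^ m else 0) + (if c m then inverse z ^ m else 0))"
  proof -
    have "(\<Sum>\<^sub>\<infinity> m\<in>{1::nat..}. (z ^ m + inverse z ^ m) * (if count lam m \<ge> N * m then 1 else 0))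
        = (\<Sum>\<^sub>\<infinity> m\<in>S. (z ^ m + inverse z ^ m) * (if count lam m \<ge> N * m then 1 else 0))"
    proof (intro infsum_cong_neutral)
      fix x assume "x \<in> {1..} - S"
      hence "count lam x = 0" "x \<ge> 1" by (auto simp: S_def count_eq_zero_iff)
      moreover have "N * x \<ge> 1" using N \<open>x \<ge> 1\<close> by simp
      ultimately show "(z ^ x + inverse z ^ x) * (if count lam x \<ge> N * x then 1 else 0) = 0" by simp
    qed (auto simp: S_def)
    also have "\<dots> = (\<Sum>m\<in>S. (if c m then z ^ m else 0) + (if c m then inverse z ^ m else 0))"
      by (simp add: S_def c_def) (intro sum.cong, auto simp: algebra_simps)
    finally show ?thesis .
  qed
  have "(\<Sum>k\<in>Kset lam. if N * nat \<bar>k\<bar> \<le> count lam (nat \<bar>k\<bar>) then z powi k else 0)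
      = 1 + ((\<Sum>k\<in>int ` S. if c (nat \<bar>k\<bar>) then z powi k else 0) +
             (\<Sum>k\<in>(\<lambda>m. - int m) ` S. if c (nat \<bar>k\<bar>) then z powi k else 0))"
    unfolding Kset_eq S_def[symmetric] c_def
    by (subst sum.insert) (auto simp: S_def intro!: sum.union_disjoint)
  also have "(\<Sum>k\<in>int ` S. if c (nat \<bar>k\<bar>) then z powi k else 0) = (\<Sum>m\<in>S. if c m then z ^ m else 0)"
    by (subst sum.reindex) (auto simp: inj_on_def intro!: sum.cong)
  also have "(\<Sum>k\<in>(\<lambda>m. - int m) ` S. if c (nat \<bar>k\<bar>) then z powi k else 0) = (\<Sum>m\<in>S. if c m then inverse z ^ m else 0)"
    by (subst sum.reindex) (auto simp: inj_on_def power_int_minus power_inverse intro!: sum.cong)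
  finally show ?thesis unfolding t_N_def inf by (simp add: sum.distrib)
qed


lemma Cm_sub_PiE:
  assumes finA: "finite A" and N: "\<And>a. a \<in> A \<Longrightarrow> N a \<ge> 1"
  shows "{m\<in>PiE A (\<lambda>_. UNIV). Cm N A m \<subseteq># lam} =
         {m\<in>PiE A (\<lambda>_. Kset lam). \<forall>a\<in>A. N a * nat \<bar>m a\<bar> \<le> count lam (nat \<bar>m a\<bar>)}"
proof -
  have "m a \<in> Kset lam" if "a \<in> A" "N a * nat \<bar>m a\<bar> \<le> count lam (nat \<bar>m a\<bar>)" for m a
  proof (cases "m a = 0")
    case False
    hence "N a * nat \<bar>m a\<bar> \<ge> 1" using N[OF that(1)] by simp
    hence "count lam (nat \<bar>m a\<bar>) > 0" using that(2) by linarith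
    thus ?thesis by (simp add: Kset_def)
  qed (simp add: Kset_def)
  thus ?thesis using Cm_sub[OF finA] by (auto simp: PiE_iff)
qed

lemma finite_Cm_sub:
  assumes finA: "finite A" and N: "\<And>a. a \<in> A \<Longrightarrow> N a \<ge> 1"
  shows "finite {m\<in>PiE A (\<lambda>_. UNIV). Cm N A m \<subseteq># lam}"
proof (rule finite_subset[of _ "PiE A (\<lambda>_. Kset lam)"])
  show "{m\<in>PiE A (\<lambda>_. UNIV). Cm N A m \<subseteq># lam} \<subseteq> PiE A (\<lambda>_. Kset lam)"
    by (subst Cm_sub_PiE[OF assms]) auto
qed (auto intro!: finite_PiE finA finite_Kset)

lemma prod_t_N:
  assumes finA: "finite A" and N: "\<And>a. a \<in> A \<Longrightarrow> N a \<ge> 1"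
  shows "(\<Prod>a\<in>A. t_N (N a) (\<zeta> a) lam) =
     (\<Sum>m\<in>{m\<in>PiE A (\<lambda>_. UNIV). Cm N A m \<subseteq># lam}. \<Prod>a\<in>A. \<zeta> a powi m a)"
proof -
  define c where "c = (\<lambda>a k. N a * nat \<bar>k\<bar> \<le> count lam (nat \<bar>k::int\<bar>))"
  have "(\<Prod>a\<in>A. t_N (N a) (\<zeta> a) lam) = (\<Prod>a\<in>A. \<Sum>k\<in>Kset lam. if c a k then \<zeta> a powi k else 0)"
    using N by (intro prod.cong refl) (simp add: t_N_sum c_def)
  also have "\<dots> = (\<Sum>m\<in>PiE A (\<lambda>_. Kset lam). \<Prod>a\<in>A. if c a (m a) then \<zeta> a powi m a else 0)"
    by (rule prod_sum_PiE[OF finA finite_Kset])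
  also have "\<dots> = (\<Sum>m\<in>PiE A (\<lambda>_. Kset lam). if (\<forall>a\<in>A. c a (m a)) then (\<Prod>a\<in>A. \<zeta> a powi m a) else 0)"
    using finA by (intro sum.cong refl) auto
  also have "\<dots> = (\<Sum>m\<in>{m\<in>PiE A (\<lambda>_. Kset lam). \<forall>a\<in>A. c a (m a)}. \<Prod>a\<in>A. \<zeta> a powi m a)"
    by (rule sum.inter_filter[symmetric]) (auto intro!: finite_PiE finA finite_Kset)
  also have "{m\<in>PiE A (\<lambda>_. Kset lam). \<forall>a\<in>A. c a (m a)} = {m\<in>PiE A (\<lambda>_. UNIV). Cm N A m \<subseteq># lam}"
    by (simp only: Cm_sub_PiE[OF assms] c_def)
  finally show ?thesis .
qed

lemma ubracket_prod_t:
  assumes finA: "finite A" and N: "\<And>a. a \<in> A \<Longrightarrow> N a \<ge> 1"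
  shows "ubracket (\<lambda>lam. \<Prod>a\<in>A. t_N (N a) (\<zeta> a) lam) =
         fam (\<lambda>m. \<Prod>a\<in>A. \<zeta> a powi m a) (Cm N A) (PiE A (\<lambda>_. UNIV))"
  by (rule ubracket_fam) (auto simp: Cm_0 finA finite_Cm_sub[OF assms] prod_t_N[OF assms])


definition XX :: "'a set set \<Rightarrow> 'a set set \<Rightarrow> 'a set set set" where
  "XX p1 p2 = {\<alpha>. partition_on (\<Union>p1 \<union> \<Union>p2) \<alpha> \<and> (\<inter>) (\<Union>p1) ` \<alpha> - {{}} = p1 \<and> (\<inter>) (\<Union>p2) ` \<alpha> - {{}} = p2}"

definition good :: "'a set set \<Rightarrow> 'a set set \<Rightarrow> bool" where
  "good p1 p2 \<longleftrightarrow> finite p1 \<and> finite p2 \<and> (\<forall>b\<in>p1 \<union> p2. finite b) \<and> disjoint p1 \<and> disjoint p2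
     \<and> {} \<notin> p1 \<and> {} \<notin> p2 \<and> \<Union>p1 \<inter> \<Union>p2 = {}"

lemma Union_minus:
  assumes "disjoint P" "c \<in> P"
  shows "\<Union>(P - {c}) = \<Union>P - c"
proof
  show "\<Union>(P - {c}) \<subseteq> \<Union>P - c"
  proof
    fix x assume "x \<in> \<Union>(P - {c})"
    then obtain c' where "c' \<in> P" "c' \<noteq> c" "x \<in> c'" by blast
    moreover have "c' \<inter> c = {}" using assms calculation unfolding disjoint_def pairwise_def disjnt_def by blast
    ultimately show "x \<in> \<Union>P - c" by blast
  qed
qed blast

lemma part_remove:
  assumes "partition_on U \<alpha>" "A \<in> \<alpha>"
  shows "partition_on (U - A) (\<alpha> - {A})"
  using assms unfolding partition_on_def disjoint_def by (auto simp: disjnt_def)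

lemma XX_insert_b:
  assumes g: "good (insert b p1) p2" and b: "b \<notin> p1" and beta: "\<beta> \<in> XX p1 p2"
  shows "insert b \<beta> \<in> XX (insert b p1) p2"
proof -
  from g b have bP: "b \<inter> \<Union>p1 = {}" and bQ: "b \<inter> \<Union>p2 = {}" and bne: "b \<noteq> {}"
    unfolding good_def disjoint_def by (auto simp: disjnt_def)
  from beta have pb: "partition_on (\<Union>p1 \<union> \<Union>p2) \<beta>" and i1: "(\<inter>) (\<Union>p1) ` \<beta> - {{}} = p1"
    and i2: "(\<inter>) (\<Union>p2) ` \<beta> - {{}} = p2" by (auto simp: XX_def)
  have U: "\<Union>\<beta> = \<Union>p1 \<union> \<Union>p2" using pb by (simp add: partition_on_def)
  have part: "partition_on (\<Union>(insert b p1) \<union> \<Union>p2) (insert b \<beta>)"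
  proof (subst partition_on_insert)
    show "disjnt b (\<Union>\<beta>)" using U bP bQ by (auto simp: disjnt_def)
    have "\<Union>(insert b p1) \<union> \<Union>p2 - b = \<Union>p1 \<union> \<Union>p2" using bP bQ by auto
    thus "partition_on (\<Union>(insert b p1) \<union> \<Union>p2 - b) \<beta> \<and> b \<subseteq> \<Union>(insert b p1) \<union> \<Union>p2 \<and> b \<noteq> {}"
      using pb bne by auto
  qed
  have A: "A \<subseteq> \<Union>p1 \<union> \<Union>p2" if "A \<in> \<beta>" for A using that U by auto
  have "(\<inter>) (\<Union>(insert b p1)) ` insert b \<beta> = insert b ((\<inter>) (\<Union>p1) ` \<beta>)"
  proof -
    have "(\<Union>(insert b p1)) \<inter> A = \<Union>p1 \<inter> A" if "A \<in> \<beta>" for A using A[OF that] bP bQ by auto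
    thus ?thesis by (auto simp: image_iff)
  qed
  hence 1: "(\<inter>) (\<Union>(insert b p1)) ` insert b \<beta> - {{}} = insert b p1" using i1 bne by (simp add: insert_Diff_if)
  have "(\<inter>) (\<Union>p2) ` insert b \<beta> = insert {} ((\<inter>) (\<Union>p2) ` \<beta>)" using bQ by auto
  hence 2: "(\<inter>) (\<Union>p2) ` insert b \<beta> - {{}} = p2" using i2 by auto
  show ?thesis using part 1 2 by (simp add: XX_def)
qed

lemma XX_insert_bc:
  assumes g: "good (insert b p1) p2" and b: "b \<notin> p1" and c: "c \<in> p2" and beta: "\<beta> \<in> XX p1 (p2 - {c})"
  shows "insert (b \<union> c) \<beta> \<in> XX (insert b p1) p2"
proof -
  from g b have bP: "b \<inter> \<Union>p1 = {}" and bQ: "b \<inter> \<Union>p2 = {}" and bne: "b \<noteq> {}"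
    and PQ: "\<Union>p1 \<inter> \<Union>p2 = {}"
    unfolding good_def disjoint_def by (auto simp: disjnt_def)
  from g c have cne: "c \<noteq> {}" by (auto simp: good_def)
  from g c have Uc: "\<Union>(p2 - {c}) = \<Union>p2 - c" by (intro Union_minus) (auto simp: good_def)
  from beta have pb: "partition_on (\<Union>p1 \<union> (\<Union>p2 - c)) \<beta>" and i1: "(\<inter>) (\<Union>p1) ` \<beta> - {{}} = p1"
    and i2: "(\<inter>) (\<Union>p2 - c) ` \<beta> - {{}} = p2 - {c}" by (auto simp: XX_def Uc)
  have U: "\<Union>\<beta> = \<Union>p1 \<union> (\<Union>p2 - c)" using pb by (simp add: partition_on_def)
  have cQ: "c \<subseteq> \<Union>p2" using c by auto
  have part: "partition_on (\<Union>(insert b p1) \<union> \<Union>p2) (insert (b \<union> c) \<beta>)"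
  proof (subst partition_on_insert)
    show "disjnt (b \<union> c) (\<Union>\<beta>)" using U bP bQ PQ cQ by (auto simp: disjnt_def)
    have "\<Union>(insert b p1) \<union> \<Union>p2 - (b \<union> c) = \<Union>p1 \<union> (\<Union>p2 - c)" using bP bQ cQ PQ by auto
    thus "partition_on (\<Union>(insert b p1) \<union> \<Union>p2 - (b \<union> c)) \<beta> \<and> b \<union> c \<subseteq> \<Union>(insert b p1) \<union> \<Union>p2 \<and> b \<union> c \<noteq> {}"
      using pb bne cQ by auto
  qed
  have A: "A \<subseteq> \<Union>p1 \<union> (\<Union>p2 - c)" if "A \<in> \<beta>" for A using that U by auto
  have "(\<inter>) (\<Union>(insert b p1)) ` insert (b \<union> c) \<beta> = insert b ((\<inter>) (\<Union>p1) ` \<beta>)"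
  proof -
    have "(\<Union>(insert b p1)) \<inter> A = \<Union>p1 \<inter> A" if "A \<in> \<beta>" for A using A[OF that] bP bQ by auto
    moreover have "(\<Union>(insert b p1)) \<inter> (b \<union> c) = b" using cQ PQ bQ by auto
    ultimately show ?thesis by (auto simp: image_iff)
  qed
  hence 1: "(\<inter>) (\<Union>(insert b p1)) ` insert (b \<union> c) \<beta> - {{}} = insert b p1" using i1 bne by (simp add: insert_Diff_if)
  have "(\<inter>) (\<Union>p2) ` insert (b \<union> c) \<beta> = insert c ((\<inter>) (\<Union>p2 - c) ` \<beta>)"
  proof -
    have "(\<Union>p2) \<inter> A = (\<Union>p2 - c) \<inter> A" if "A \<in> \<beta>" for A using A[OF that] PQ cQ by auto
    moreover have "(\<Union>p2) \<inter> (b \<union> c) = c" using cQ bQ by auto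
    ultimately show ?thesis by (auto simp: image_iff)
  qed
  hence 2: "(\<inter>) (\<Union>p2) ` insert (b \<union> c) \<beta> - {{}} = p2" using i2 cne c by (simp add: insert_Diff_if insert_absorb)
  show ?thesis using part 1 2 by (simp add: XX_def)
qed


lemma XX_insert_cases:
  assumes g: "good (insert b p1) p2" and b: "b \<notin> p1" and alpha: "\<alpha> \<in> XX (insert b p1) p2"
  shows "(\<exists>\<beta>\<in>XX p1 p2. \<alpha> = insert b \<beta>) \<or> (\<exists>c\<in>p2. \<exists>\<beta>\<in>XX p1 (p2 - {c}). \<alpha> = insert (b \<union> c) \<beta>)"
proof -
  from g b have bP: "b \<inter> \<Union>p1 = {}" and bQ: "b \<inter> \<Union>p2 = {}" and bne: "b \<noteq> {}"
    and PQ: "\<Union>p1 \<inter> \<Union>p2 = {}"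
    unfolding good_def disjoint_def by (auto simp: disjnt_def)
  define P where "P = b \<union> \<Union>p1"
  define Q where "Q = \<Union>p2"
  from alpha have pa: "partition_on (P \<union> Q) \<alpha>" and i1: "(\<inter>) P ` \<alpha> - {{}} = insert b p1"
    and i2: "(\<inter>) Q ` \<alpha> - {{}} = p2" by (auto simp: XX_def P_def Q_def)
  have disj: "A \<inter> A' = {}" if "A \<in> \<alpha>" "A' \<in> \<alpha>" "A \<noteq> A'" for A A'
    using pa that unfolding partition_on_def pairwise_def disjnt_def by blast
  have Asub: "A \<subseteq> P \<union> Q" if "A \<in> \<alpha>" for A using pa that unfolding partition_on_def by auto
  obtain A where A: "A \<in> \<alpha>" "P \<inter> A = b" using i1 by (metis (no_types, lifting) Diff_iff imageE insertI1)
  define c where "c = Q \<inter> A"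
  have Abc: "A = b \<union> c" using Asub[OF A(1)] A(2) by (auto simp: c_def)
  define \<beta> where "\<beta> = \<alpha> - {A}"
  have al: "\<alpha> = insert A \<beta>" using A by (auto simp: \<beta>_def)
  have Anb: "A \<notin> \<beta>" by (simp add: \<beta>_def)
  have disjb: "A \<inter> A' = {}" if "A' \<in> \<beta>" for A' using that A(1) by (intro disj) (auto simp: \<beta>_def)
  have pb: "partition_on (P \<union> Q - A) \<beta>" unfolding \<beta>_def by (rule part_remove[OF pa A(1)])
  have trP: "\<Union>p1 \<inter> A' = P \<inter> A'" if "A' \<in> \<beta>" for A'
  proof -
    have "b \<inter> A' = {}" using disjb[OF that] A by blast
    thus ?thesis by (auto simp: P_def)
  qed
  have imP: "(\<inter>) (\<Union>p1) ` \<beta> - {{}} = p1"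
  proof -
    have e: "(\<inter>) (\<Union>p1) ` \<beta> = (\<inter>) P ` \<beta>" using trP by (auto simp: image_iff)
    have "b \<notin> (\<inter>) P ` \<beta>"
    proof
      assume "b \<in> (\<inter>) P ` \<beta>"
      then obtain A' where "A' \<in> \<beta>" "P \<inter> A' = b" by auto
      hence "b \<subseteq> A \<inter> A'" using A by auto
      moreover have "A \<inter> A' = {}" using disjb \<open>A' \<in> \<beta>\<close> by blast
      ultimately show False using bne by auto
    qed
    moreover have "(\<inter>) P ` \<alpha> = insert b ((\<inter>) P ` \<beta>)" using al A(2) by simp
    ultimately have "insert b ((\<inter>) P ` \<beta> - {{}}) = insert b p1" using i1 bne by (simp add: insert_Diff_if)
    moreover have "b \<notin> (\<inter>) P ` \<beta> - {{}}" using \<open>b \<notin> (\<inter>) P ` \<beta>\<close> by blast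
    ultimately have "(\<inter>) P ` \<beta> - {{}} = p1" using b by (simp add: insert_ident)
    thus ?thesis using e by simp
  qed
  show ?thesis
  proof (cases "c = {}")
    case True
    hence Ab: "A = b" using Abc by simp
    have "P \<union> Q - A = \<Union>p1 \<union> \<Union>p2" using Ab bP bQ by (auto simp: P_def Q_def)
    moreover have "(\<inter>) Q ` \<beta> - {{}} = p2"
    proof -
      have "Q \<inter> A = {}" using True by (simp add: c_def)
      hence "(\<inter>) Q ` \<alpha> = insert {} ((\<inter>) Q ` \<beta>)" using al by simp
      thus ?thesis using i2 by (simp add: insert_Diff1)
    qed
    ultimately have "\<beta> \<in> XX p1 p2" using pb imP by (simp add: XX_def Q_def)
    thus ?thesis using al Ab by blast
  next
    case False
    have cp2: "c \<in> p2" using i2 A False by (auto simp: c_def)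
    have Uc: "\<Union>(p2 - {c}) = Q - c" using g cp2 unfolding Q_def by (intro Union_minus) (auto simp: good_def)
    have cQ: "c \<subseteq> Q" by (simp add: c_def)
    have "P \<union> Q - A = \<Union>p1 \<union> \<Union>(p2 - {c})" unfolding Abc Uc using bP bQ PQ cQ by (auto simp: P_def Q_def)
    moreover have "(\<inter>) (\<Union>(p2 - {c})) ` \<beta> - {{}} = p2 - {c}"
    proof -
      have trQ: "(Q - c) \<inter> A' = Q \<inter> A'" if "A' \<in> \<beta>" for A'
      proof -
        have "c \<inter> A' = {}" using disjb[OF that] by (auto simp: c_def)
        thus ?thesis by auto
      qed
      have e: "(\<inter>) (Q - c) ` \<beta> = (\<inter>) Q ` \<beta>" using trQ by (auto simp: image_iff)
      have "c \<notin> (\<inter>) Q ` \<beta>"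
      proof
        assume "c \<in> (\<inter>) Q ` \<beta>"
        then obtain A' where "A' \<in> \<beta>" "Q \<inter> A' = c" by auto
        hence "c \<subseteq> A \<inter> A'" using Abc by auto
        moreover have "A \<inter> A' = {}" using disjb \<open>A' \<in> \<beta>\<close> by blast
        ultimately show False using False by auto
      qed
      moreover have "(\<inter>) Q ` \<alpha> = insert c ((\<inter>) Q ` \<beta>)" using al by (simp add: c_def)
      ultimately have "insert c ((\<inter>) Q ` \<beta> - {{}}) = p2" using i2 False by (simp add: insert_Diff_if)
      moreover have "c \<notin> (\<inter>) Q ` \<beta> - {{}}" using \<open>c \<notin> (\<inter>) Q ` \<beta>\<close> by blast
      ultimately have "(\<inter>) Q ` \<beta> - {{}} = p2 - {c}" by (metis Diff_insert_absorb)
      thus ?thesis using e Uc by simp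
    qed
    ultimately have "\<beta> \<in> XX p1 (p2 - {c})" using pb imP by (simp add: XX_def)
    thus ?thesis using al Abc cp2 by blast
  qed
qed


definition ww :: "nat \<Rightarrow> int" where "ww n = (-1) ^ (n + 1) * fact (n - 1)"
definition GG :: "nat \<Rightarrow> nat \<Rightarrow> nat \<Rightarrow> int" where
  "GG k p q = (-1) ^ (p + q + k + 1) * fact (q + k - 1) * pochhammer (int k) p"

lemma GG_rec:
  assumes "k + q \<ge> 1"
  shows "GG k (Suc p) q = GG (k + 1) p q + int q * GG (k + 1) p (q - 1)"
proof (cases q)
  case 0
  then obtain k' where k: "k = Suc k'" using assms by (cases k) auto
  show ?thesis unfolding GG_def 0 k
    by (simp add: pochhammer_rec algebra_simps)
next
  case (Suc q')
  have "GG (k + 1) p q + int q * GG (k + 1) p (q - 1) =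
     (-1) ^ (p + q' + k + 1) * pochhammer (int k + 1) p * fact (q' + k) * (int (q' + k + 1) - int (q' + 1))"
    unfolding GG_def Suc by (simp add: algebra_simps fact_Suc[of "q'+k", simplified])
  also have "\<dots> = GG k (Suc p) q"
    unfolding GG_def Suc by (simp add: pochhammer_rec algebra_simps)
  finally show ?thesis ..
qed

lemma good_sub: "good p1 p2 \<Longrightarrow> p1' \<subseteq> p1 \<Longrightarrow> p2' \<subseteq> p2 \<Longrightarrow> good p1' p2'"
  unfolding good_def by (auto intro: finite_subset pairwise_subset) blast

lemma finite_XX: "good p1 p2 \<Longrightarrow> finite (XX p1 p2)"
  by (rule finite_subset[of _ "Pow (Pow (\<Union>p1 \<union> \<Union>p2))"]) (auto simp: XX_def partition_on_def good_def)

lemma XX_elem_finite: "good p1 p2 \<Longrightarrow> \<beta> \<in> XX p1 p2 \<Longrightarrow> finite \<beta>"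
  by (rule finite_subset[of _ "Pow (\<Union>p1 \<union> \<Union>p2)"]) (auto simp: XX_def partition_on_def good_def)

lemma XX_Un: "\<beta> \<in> XX p1 p2 \<Longrightarrow> \<Union>\<beta> = \<Union>p1 \<union> \<Union>p2"
  by (auto simp: XX_def partition_on_def)

lemma XX_empty:
  assumes "good {} p2"
  shows "XX {} p2 = {p2}"
proof -
  have img: "(\<inter>) (\<Union>p2) ` \<alpha> = \<alpha>" if "\<Union>\<alpha> = \<Union>p2" for \<alpha> :: "'a set set"
  proof -
    have "(\<inter>) (\<Union>p2) ` \<alpha> = id ` \<alpha>"
    proof (rule image_cong[OF refl])
      fix A assume "A \<in> \<alpha>" thus "\<Union>p2 \<inter> A = id A" using that by auto
    qed
    thus ?thesis by simp
  qed
  have "\<alpha> = p2" if "\<alpha> \<in> XX {} p2" for \<alpha>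
  proof -
    have pa: "partition_on (\<Union>p2) \<alpha>" and i2: "(\<inter>) (\<Union>p2) ` \<alpha> - {{}} = p2"
      using that by (simp_all add: XX_def)
    have "\<Union>\<alpha> = \<Union>p2" "{} \<notin> \<alpha>" using pa by (simp_all add: partition_on_def)
    thus ?thesis using i2 img by simp
  qed
  moreover have "p2 \<in> XX {} p2"
  proof -
    have "partition_on (\<Union>p2) p2" using assms by (simp add: partition_on_def good_def)
    moreover have "{} \<notin> p2" using assms by (simp add: good_def)
    ultimately show ?thesis using img[of p2] by (simp add: XX_def) auto
  qed
  ultimately show ?thesis by blast
qed


lemma XX_insert_eq:
  assumes g: "good (insert b p1) p2" and b: "b \<notin> p1"
  shows "XX (insert b p1) p2 = insert b ` XX p1 p2 \<union> (\<Union>c\<in>p2. insert (b \<union> c) ` XX p1 (p2 - {c}))"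
proof (intro equalityI subsetI)
  fix \<alpha> assume "\<alpha> \<in> XX (insert b p1) p2"
  from XX_insert_cases[OF g b this]
  show "\<alpha> \<in> insert b ` XX p1 p2 \<union> (\<Union>c\<in>p2. insert (b \<union> c) ` XX p1 (p2 - {c}))"
  proof
    assume "\<exists>\<beta>\<in>XX p1 p2. \<alpha> = insert b \<beta>"
    thus ?thesis by (intro UnI1) (auto simp: image_iff)
  next
    assume "\<exists>c\<in>p2. \<exists>\<beta>\<in>XX p1 (p2 - {c}). \<alpha> = insert (b \<union> c) \<beta>"
    then obtain c \<beta> where "c \<in> p2" "\<beta> \<in> XX p1 (p2 - {c})" "\<alpha> = insert (b \<union> c) \<beta>" by blast
    thus ?thesis by (intro UnI2 UN_I[of c]) auto
  qed
next
  fix \<alpha> assume "\<alpha> \<in> insert b ` XX p1 p2 \<union> (\<Union>c\<in>p2. insert (b \<union> c) ` XX p1 (p2 - {c}))"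
  thus "\<alpha> \<in> XX (insert b p1) p2"
  proof
    assume "\<alpha> \<in> insert b ` XX p1 p2"
    then obtain \<beta> where "\<beta> \<in> XX p1 p2" "\<alpha> = insert b \<beta>" by blast
    thus ?thesis using XX_insert_b[OF g b] by simp
  next
    assume "\<alpha> \<in> (\<Union>c\<in>p2. insert (b \<union> c) ` XX p1 (p2 - {c}))"
    then obtain c \<beta> where "c \<in> p2" "\<beta> \<in> XX p1 (p2 - {c})" "\<alpha> = insert (b \<union> c) \<beta>" by blast
    thus ?thesis using XX_insert_bc[OF g b] by simp
  qed
qed

lemma b_disj:
  assumes g: "good (insert b p1) p2" and b: "b \<notin> p1" and p2': "p2' \<subseteq> p2" and beta: "\<beta> \<in> XX p1 p2'"
    and D: "D \<in> \<beta>"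
  shows "\<not> b \<subseteq> D"
proof -
  from g b have bP: "b \<inter> \<Union>p1 = {}" and bQ: "b \<inter> \<Union>p2 = {}" and bne: "b \<noteq> {}"
    unfolding good_def disjoint_def by (auto simp: disjnt_def)
  have "D \<subseteq> \<Union>\<beta>" using D by blast
  also have "\<dots> = \<Union>p1 \<union> \<Union>p2'" by (rule XX_Un[OF beta])
  also have "\<dots> \<subseteq> \<Union>p1 \<union> \<Union>p2" using p2' by blast
  finally have "D \<subseteq> \<Union>p1 \<union> \<Union>p2" .
  thus ?thesis using bP bQ bne by blast
qed

lemma F_closed:
  assumes "finite p1"
  shows "good p1 p2 \<Longrightarrow> k + card p2 \<ge> 1 \<Longrightarrow> (\<Sum>\<alpha>\<in>XX p1 p2. ww (card \<alpha> + k)) = GG k (card p1) (card p2)"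
  using assms
proof (induction p1 arbitrary: p2 k rule: finite_induct)
  case empty
  then show ?case using XX_empty[of p2]
    by (simp add: ww_def GG_def algebra_simps)
next
  case (insert b p1)
  note g = insert.prems(1)
  have g1: "good p1 p2" using good_sub[OF g] by blast
  have bne: "b \<noteq> {}" using g by (auto simp: good_def)
  have fin2: "finite p2" using g by (simp add: good_def)
  have gc: "good p1 (p2 - {c})" for c using good_sub[OF g] by blast
  define S1 where "S1 = insert b ` XX p1 p2"
  define S2 where "S2 = (\<lambda>c. insert (b \<union> c) ` XX p1 (p2 - {c}))"
  have eq: "XX (insert b p1) p2 = S1 \<union> (\<Union>c\<in>p2. S2 c)"
    unfolding S1_def S2_def by (rule XX_insert_eq[OF g insert.hyps(2)])
  have notin1: "b \<notin> \<beta>" if "\<beta> \<in> XX p1 p2" for \<beta>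
    using b_disj[OF g insert.hyps(2) _ that] by blast
  have notin2: "D \<notin> \<beta>" if "\<beta> \<in> XX p1 (p2 - {c})" "b \<subseteq> D" for \<beta> c D
    using b_disj[OF g insert.hyps(2) _ that(1)] that(2) by blast
  have finS2: "finite (S2 c)" for c unfolding S2_def using finite_XX[OF gc] by simp
  have finS1: "finite S1" unfolding S1_def using finite_XX[OF g1] by simp
  have bQ: "b \<inter> \<Union>p2 = {}" using g unfolding good_def by blast
  have bc: "b \<inter> c = {}" if "c \<in> p2" for c using bQ that by blast
  have cne: "c \<noteq> {}" if "c \<in> p2" for c using g that unfolding good_def by blast
  have disj12: "S1 \<inter> (\<Union>c\<in>p2. S2 c) = {}"
  proof (rule ccontr)
    assume "S1 \<inter> (\<Union>c\<in>p2. S2 c) \<noteq> {}"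
    then obtain \<alpha> c where a1: "\<alpha> \<in> S1" and a2: "\<alpha> \<in> S2 c" and c: "c \<in> p2" by blast
    from a1 obtain \<beta> where \<beta>: "\<beta> \<in> XX p1 p2" "\<alpha> = insert b \<beta>" unfolding S1_def by blast
    from a2 obtain \<beta>' where \<beta>': "\<beta>' \<in> XX p1 (p2 - {c})" "\<alpha> = insert (b \<union> c) \<beta>'" unfolding S2_def by blast
    have "b \<in> insert (b \<union> c) \<beta>'" using \<beta> \<beta>' by blast
    moreover have "b \<notin> \<beta>'" using notin2[OF \<beta>'(1)] by blast
    ultimately have "b = b \<union> c" by blast
    hence "c \<subseteq> b" by blast
    thus False using bc[OF c] cne[OF c] by blast
  qed
  have disj22: "S2 c \<inter> S2 c' = {}" if "c \<in> p2" "c' \<in> p2" "c \<noteq> c'" for c c'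
  proof (rule ccontr)
    assume "S2 c \<inter> S2 c' \<noteq> {}"
    then obtain \<alpha> where a1: "\<alpha> \<in> S2 c" and a2: "\<alpha> \<in> S2 c'" by blast
    from a1 obtain \<beta> where \<beta>: "\<beta> \<in> XX p1 (p2 - {c})" "\<alpha> = insert (b \<union> c) \<beta>" unfolding S2_def by blast
    from a2 obtain \<beta>' where \<beta>': "\<beta>' \<in> XX p1 (p2 - {c'})" "\<alpha> = insert (b \<union> c') \<beta>'" unfolding S2_def by blast
    have "b \<union> c \<in> insert (b \<union> c') \<beta>'" using \<beta> \<beta>' by blast
    moreover have "b \<union> c \<notin> \<beta>'" using notin2[OF \<beta>'(1)] by blast
    ultimately have e: "b \<union> c = b \<union> c'" by blast
    have "c = c'"
    proof -
      have "c = (b \<union> c) - b" using bc[OF that(1)] by blast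
      also have "\<dots> = (b \<union> c') - b" using e by simp
      also have "\<dots> = c'" using bc[OF that(2)] by blast
      finally show ?thesis .
    qed
    with \<open>c \<noteq> c'\<close> show False ..
  qed
  have sum1: "(\<Sum>\<alpha>\<in>S1. ww (card \<alpha> + k)) = GG (k + 1) (card p1) (card p2)"
  proof -
    have "(\<Sum>\<alpha>\<in>S1. ww (card \<alpha> + k)) = (\<Sum>\<beta>\<in>XX p1 p2. ww (card (insert b \<beta>) + k))"
      unfolding S1_def
    proof (subst sum.reindex)
      show "inj_on (insert b) (XX p1 p2)"
        by (rule inj_onI) (metis insert_ident notin1)
    qed simp
    also have "\<dots> = (\<Sum>\<beta>\<in>XX p1 p2. ww (card \<beta> + (k + 1)))"
      by (intro sum.cong refl) (simp add: notin1 XX_elem_finite[OF g1])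
    also have "\<dots> = GG (k + 1) (card p1) (card p2)"
      by (rule insert.IH[OF g1]) simp
    finally show ?thesis .
  qed
  have sum2: "(\<Sum>\<alpha>\<in>S2 c. ww (card \<alpha> + k)) = GG (k + 1) (card p1) (card p2 - 1)" if c: "c \<in> p2" for c
  proof -
    have "(\<Sum>\<alpha>\<in>S2 c. ww (card \<alpha> + k)) = (\<Sum>\<beta>\<in>XX p1 (p2 - {c}). ww (card (insert (b \<union> c) \<beta>) + k))"
      unfolding S2_def
    proof (subst sum.reindex)
      show "inj_on (insert (b \<union> c)) (XX p1 (p2 - {c}))"
        by (rule inj_onI) (metis insert_ident notin2 Un_upper1)
    qed simp
    also have "\<dots> = (\<Sum>\<beta>\<in>XX p1 (p2 - {c}). ww (card \<beta> + (k + 1)))"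
      by (intro sum.cong refl) (simp add: notin2 XX_elem_finite[OF gc])
    also have "\<dots> = GG (k + 1) (card p1) (card (p2 - {c}))"
      by (rule insert.IH[OF gc]) simp
    finally show ?thesis using c fin2 by simp
  qed
  have "(\<Sum>\<alpha>\<in>XX (insert b p1) p2. ww (card \<alpha> + k)) =
        (\<Sum>\<alpha>\<in>S1. ww (card \<alpha> + k)) + (\<Sum>c\<in>p2. \<Sum>\<alpha>\<in>S2 c. ww (card \<alpha> + k))"
  proof -
    have u: "(\<Sum>\<alpha>\<in>(\<Union>c\<in>p2. S2 c). ww (card \<alpha> + k)) = (\<Sum>c\<in>p2. \<Sum>\<alpha>\<in>S2 c. ww (card \<alpha> + k))"
      by (rule sum.UNION_disjoint[OF fin2]) (use finS2 disj22 in blast)+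
    have "finite (\<Union>c\<in>p2. S2 c)" using fin2 finS2 by blast
    thus ?thesis unfolding eq u[symmetric] by (rule sum.union_disjoint[OF finS1 _ disj12])
  qed
  also have "\<dots> = GG (k + 1) (card p1) (card p2) + int (card p2) * GG (k + 1) (card p1) (card p2 - 1)"
    using sum2 by (simp add: sum1)
  also have "\<dots> = GG k (card (insert b p1)) (card p2)"
    using GG_rec[of k "card p2" "card p1"] insert.prems(2) insert.hyps by simp
  finally show ?case .
qed

lemma XX_vanish:
  assumes g: "good p1 p2" and "p1 \<noteq> {}" "p2 \<noteq> {}"
  shows "(\<Sum>\<alpha>\<in>XX p1 p2. ww (card \<alpha>)) = 0"
proof -
  have f: "finite p1" "finite p2" using g by (auto simp: good_def)
  have "card p1 \<ge> 1" "card p2 \<ge> 1" using f assms by (auto simp: Suc_le_eq card_gt_0_iff)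
  then obtain p where "card p1 = Suc p" by (cases "card p1") auto
  thus ?thesis using F_closed[OF f(1) g, of 0] \<open>card p2 \<ge> 1\<close> by (simp add: GG_def pochhammer_rec)
qed


lemma sum_restrict_part:
  fixes h :: "'a set \<Rightarrow> 'b::comm_monoid_add"
  assumes pa: "partition_on I \<alpha>" and fin: "finite \<alpha>" and h0: "h {} = 0"
  shows "(\<Sum>A\<in>\<alpha>. h (P \<inter> A)) = (\<Sum>B\<in>(\<inter>) P ` \<alpha> - {{}}. h B)"
proof -
  have "(\<Sum>B\<in>(\<inter>) P ` \<alpha>. h B) = (\<Sum>A\<in>\<alpha>. h (P \<inter> A))"
  proof (subst sum.reindex_nontrivial[OF fin])
    fix x y assume "x \<in> \<alpha>" "y \<in> \<alpha>" "x \<noteq> y" "P \<inter> x = P \<inter> y"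
    hence "P \<inter> x = {}" using pa unfolding partition_on_def disjoint_def disjnt_def by blast
    thus "h (P \<inter> x) = 0" using h0 by simp
  qed (simp add: comp_def)
  moreover have "(\<Sum>B\<in>(\<inter>) P ` \<alpha>. h B) = (\<Sum>B\<in>(\<inter>) P ` \<alpha> - {{}}. h B)"
    using fin h0 by (intro sum.mono_neutral_right) auto
  ultimately show ?thesis by simp
qed

lemma cumulant_vanish:
  fixes h :: "nat set \<Rightarrow> 'b::comm_monoid_add" and \<phi> :: "'b \<Rightarrow> complex"
  assumes finI: "finite I" and PI: "P \<subseteq> I" and Pne: "P \<noteq> {}" and Qne: "I - P \<noteq> {}"
    and h0: "h {} = 0" and hsplit: "\<And>A. A \<subseteq> I \<Longrightarrow> h A = h (P \<inter> A) + h ((I - P) \<inter> A)"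
  shows "(\<Sum>\<alpha>\<in>{\<alpha>. partition_on I \<alpha>}. of_int (ww (card \<alpha>)) * \<phi> (\<Sum>A\<in>\<alpha>. h A)) = 0"
proof -
  define Q where "Q = I - P"
  define g where "g = (\<lambda>\<alpha>. ((\<inter>) P ` \<alpha> - {{}}, (\<inter>) Q ` \<alpha> - {{}}))"
  define SP where "SP = (\<lambda>U::nat set. {\<alpha>. partition_on U \<alpha>})"
  define Psi where "Psi = (\<lambda>\<pi>. \<Sum>B\<in>\<pi>. h B)"
  have finSP: "finite (SP U)" if "finite U" for U using finitely_many_partition_on[OF that] by (simp add: SP_def)
  have finQ: "finite Q" "finite P" using finI PI by (auto simp: Q_def intro: finite_subset)
  have gmap: "g ` SP I \<subseteq> SP P \<times> SP Q"
  proof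
    fix x assume "x \<in> g ` SP I"
    then obtain \<alpha> where a: "partition_on I \<alpha>" "x = g \<alpha>" by (auto simp: SP_def)
    have "partition_on (P \<inter> I) ((\<inter>) P ` \<alpha> - {{}})" "partition_on (Q \<inter> I) ((\<inter>) Q ` \<alpha> - {{}})"
      using partition_on_restrict[OF a(1)] by auto
    moreover have "P \<inter> I = P" "Q \<inter> I = Q" using PI by (auto simp: Q_def)
    ultimately show "x \<in> SP P \<times> SP Q" using a by (simp add: g_def SP_def)
  qed
  have hsum: "(\<Sum>A\<in>\<alpha>. h A) = Psi (fst (g \<alpha>)) + Psi (snd (g \<alpha>))" if "\<alpha> \<in> SP I" for \<alpha>
  proof -
    have pa: "partition_on I \<alpha>" using that by (simp add: SP_def)
    have fa: "finite \<alpha>" using finite_elements[OF finI pa] .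
    have "(\<Sum>A\<in>\<alpha>. h A) = (\<Sum>A\<in>\<alpha>. h (P \<inter> A) + h (Q \<inter> A))"
      using pa hsplit by (intro sum.cong refl) (auto simp: Q_def partition_on_def)
    also have "\<dots> = (\<Sum>A\<in>\<alpha>. h (P \<inter> A)) + (\<Sum>A\<in>\<alpha>. h (Q \<inter> A))" by (rule sum.distrib)
    finally show ?thesis
      by (simp add: g_def Psi_def sum_restrict_part[where h=h and P=P, OF pa fa h0] sum_restrict_part[where h=h and P=Q, OF pa fa h0])
  qed
  have fiber: "{\<alpha>\<in>SP I. g \<alpha> = y} = XX (fst y) (snd y)" if y: "y \<in> SP P \<times> SP Q" for y
  proof -
    have u: "\<Union>(fst y) = P" "\<Union>(snd y) = Q" using y by (auto simp: SP_def partition_on_def)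
    have "P \<union> Q = I" using PI by (auto simp: Q_def)
    thus ?thesis using u by (auto simp: XX_def g_def SP_def prod_eq_iff)
  qed
  have goody: "good (fst y) (snd y)" if y: "y \<in> SP P \<times> SP Q" for y
  proof -
    have p1: "partition_on P (fst y)" and p2: "partition_on Q (snd y)" using y by (auto simp: SP_def)
    have "finite (fst y)" "finite (snd y)"
      using finite_elements[OF finQ(2) p1] finite_elements[OF finQ(1) p2] .
    moreover have "\<forall>b\<in>fst y \<union> snd y. finite b"
      using p1 p2 finQ unfolding partition_on_def by (auto intro: finite_subset)
    moreover have "\<Union>(fst y) \<inter> \<Union>(snd y) = {}" using p1 p2 unfolding partition_on_def Q_def by auto
    ultimately show ?thesis using p1 p2 unfolding good_def partition_on_def by blast
  qed
  have "(\<Sum>\<alpha>\<in>SP I. of_int (ww (card \<alpha>)) * \<phi> (\<Sum>A\<in>\<alpha>. h A))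
      = (\<Sum>y\<in>SP P \<times> SP Q. \<Sum>\<alpha>\<in>{\<alpha>\<in>SP I. g \<alpha> = y}. of_int (ww (card \<alpha>)) * \<phi> (\<Sum>A\<in>\<alpha>. h A))"
    by (rule sum.group[symmetric, OF finSP[OF finI] _ gmap]) (intro finite_cartesian_product finSP finQ)
  also have "\<dots> = (\<Sum>y\<in>SP P \<times> SP Q. \<phi> (Psi (fst y) + Psi (snd y)) * of_int (\<Sum>\<alpha>\<in>XX (fst y) (snd y). ww (card \<alpha>)))"
  proof (intro sum.cong refl)
    fix y assume y: "y \<in> SP P \<times> SP Q"
    have "(\<Sum>\<alpha>\<in>{\<alpha>\<in>SP I. g \<alpha> = y}. of_int (ww (card \<alpha>)) * \<phi> (\<Sum>A\<in>\<alpha>. h A))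
        = (\<Sum>\<alpha>\<in>{\<alpha>\<in>SP I. g \<alpha> = y}. \<phi> (Psi (fst y) + Psi (snd y)) * of_int (ww (card \<alpha>)))"
      by (intro sum.cong refl) (auto simp: hsum)
    thus "(\<Sum>\<alpha>\<in>{\<alpha>\<in>SP I. g \<alpha> = y}. of_int (ww (card \<alpha>)) * \<phi> (\<Sum>A\<in>\<alpha>. h A))
        = \<phi> (Psi (fst y) + Psi (snd y)) * of_int (\<Sum>\<alpha>\<in>XX (fst y) (snd y). ww (card \<alpha>))"
      by (simp add: fiber[OF y] sum_distrib_left)
  qed
  also have "\<dots> = 0"
  proof (intro sum.neutral ballI)
    fix y assume y: "y \<in> SP P \<times> SP Q"
    have "fst y \<noteq> {}" "snd y \<noteq> {}" using y Pne Qne by (auto simp: SP_def partition_on_def Q_def)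
    thus "\<phi> (Psi (fst y) + Psi (snd y)) * of_int (\<Sum>\<alpha>\<in>XX (fst y) (snd y). ww (card \<alpha>)) = 0"
      using XX_vanish[OF goody[OF y]] by simp
  qed
  finally show ?thesis by (simp add: SP_def)
qed


lemma mobius_ww:
  assumes "\<alpha> \<in> set_partitions l"
  shows "mobius \<alpha> {{1..l}} = ww (card \<alpha>)"
proof -
  have "{A\<in>\<alpha>. A \<subseteq> {1..l}} = \<alpha>" using assms
    by (auto simp: set_partitions_def partition_on_def)
  thus ?thesis by (simp add: mobius_def ww_def)
qed

lemma sprod_cong: "(\<And>A. A \<in> \<alpha> \<Longrightarrow> F A = F' A) \<Longrightarrow> sprod F \<alpha> = sprod F' \<alpha>"
  unfolding sprod_def by (intro ext sum.cong refl prod.cong) auto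

lemma Cm_split:
  assumes finA: "finite A"
  shows "Cm N A m = Cm N (A \<inter> {j. nat \<bar>m j\<bar> = k0}) m + Cm N (A - {j. nat \<bar>m j\<bar> = k0}) m"
proof (rule multiset_eqI)
  fix x
  define P where "P = {j. nat \<bar>m j\<bar> = k0}"
  have f1: "finite (A \<inter> P)" "finite (A - P)" using finA by auto
  show "count (Cm N A m) x = count (Cm N (A \<inter> {j. nat \<bar>m j\<bar> = k0}) m + Cm N (A - {j. nat \<bar>m j\<bar> = k0}) m) x"
    unfolding P_def[symmetric] count_union count_Cm[OF finA] count_Cm[OF f1(1)] count_Cm[OF f1(2)]
  proof (cases "x = k0")
    case True
    have "{a\<in>A. nat \<bar>m a\<bar> = x} = {a\<in>A \<inter> P. nat \<bar>m a\<bar> = x}" using True by (auto simp: P_def)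
    moreover have "x \<notin> (\<lambda>a. nat \<bar>m a\<bar>) ` (A - P)" using True by (auto simp: P_def)
    moreover have "x \<in> (\<lambda>a. nat \<bar>m a\<bar>) ` A \<longleftrightarrow> x \<in> (\<lambda>a. nat \<bar>m a\<bar>) ` (A \<inter> P)" using True by (auto simp: P_def)
    ultimately show "(if x \<in> (\<lambda>a. nat \<bar>m a\<bar>) ` A then MAX a\<in>{a \<in> A. nat \<bar>m a\<bar> = x}. N a * x else 0) =
      (if x \<in> (\<lambda>a. nat \<bar>m a\<bar>) ` (A \<inter> P) then MAX a\<in>{a \<in> A \<inter> P. nat \<bar>m a\<bar> = x}. N a * x else 0) +
      (if x \<in> (\<lambda>a. nat \<bar>m a\<bar>) ` (A - P) then MAX a\<in>{a \<in> A - P. nat \<bar>m a\<bar> = x}. N a * x else 0)"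
      by simp
  next
    case False
    have "{a\<in>A. nat \<bar>m a\<bar> = x} = {a\<in>A - P. nat \<bar>m a\<bar> = x}" using False by (auto simp: P_def)
    moreover have "x \<notin> (\<lambda>a. nat \<bar>m a\<bar>) ` (A \<inter> P)" using False by (auto simp: P_def)
    moreover have "x \<in> (\<lambda>a. nat \<bar>m a\<bar>) ` A \<longleftrightarrow> x \<in> (\<lambda>a. nat \<bar>m a\<bar>) ` (A - P)" using False by (auto simp: P_def)
    ultimately show "(if x \<in> (\<lambda>a. nat \<bar>m a\<bar>) ` A then MAX a\<in>{a \<in> A. nat \<bar>m a\<bar> = x}. N a * x else 0) =
      (if x \<in> (\<lambda>a. nat \<bar>m a\<bar>) ` (A \<inter> P) then MAX a\<in>{a \<in> A \<inter> P. nat \<bar>m a\<bar> = x}. N a * x else 0) +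
      (if x \<in> (\<lambda>a. nat \<bar>m a\<bar>) ` (A - P) then MAX a\<in>{a \<in> A - P. nat \<bar>m a\<bar> = x}. N a * x else 0)"
      by simp
  qed
qed

lemma Cm_empty: "Cm N {} m = {#}" by (simp add: Cm_def)

lemma Cm_uniform:
  assumes finA: "finite A" and ne: "A \<noteq> {}" and u: "\<And>a. a \<in> A \<Longrightarrow> nat \<bar>m a\<bar> = k"
  shows "Cm N A m = replicate_mset (k * Max (N ` A)) k"
proof -
  have img: "(\<lambda>a. nat \<bar>m a\<bar>) ` A = {k}" using ne u by auto
  have set: "{a\<in>A. nat \<bar>m a\<bar> = k} = A" using u by auto
  have "Max ((\<lambda>a. N a * k) ` A) = k * Max (N ` A)"
  proof -
    have "Fun.mono (\<lambda>x::nat. k * x)" by (rule monoI) simp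
    from mono_Max_commute[OF this, of "N ` A"] finA ne
    have "k * Max (N ` A) = Max ((\<lambda>x. k * x) ` N ` A)" by simp
    also have "(\<lambda>x. k * x) ` N ` A = (\<lambda>a. N a * k) ` A" by (auto simp: image_image mult.commute)
    finally show ?thesis by simp
  qed
  thus ?thesis unfolding Cm_def img by (simp add: set)
qed

lemma sum_replicate: "finite S \<Longrightarrow> (\<Sum>A\<in>S. replicate_mset (f A) x) = replicate_mset (sum f S) x"
  by (rule multiset_eqI) (simp add: count_sum)

lemma THE_block:
  assumes pa: "partition_on I \<alpha>" and A: "A \<in> \<alpha>" "x \<in> A"
  shows "(THE B. B \<in> \<alpha> \<and> x \<in> B) = A"
proof (rule the_equality)
  fix B assume "B \<in> \<alpha> \<and> x \<in> B"
  thus "B = A" using pa A unfolding partition_on_def disjoint_def disjnt_def by blast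
qed (use A in auto)

lemma sum_glue:
  assumes pa: "partition_on I \<alpha>" and finI: "finite I"
  shows "(\<Sum>mm\<in>{mm\<in>PiE \<alpha> (\<lambda>A. PiE A (\<lambda>_. UNIV::int set)). (\<Sum>A\<in>\<alpha>. Cm N A (mm A)) = r}.
             \<Prod>A\<in>\<alpha>. \<Prod>a\<in>A. \<zeta> a powi mm A a)
       = (\<Sum>m\<in>{m\<in>PiE I (\<lambda>_. UNIV). (\<Sum>A\<in>\<alpha>. Cm N A m) = r}. \<Prod>j\<in>I. (\<zeta> j :: complex) powi m j)"
proof (rule sum.reindex_bij_witness[symmetric, of _ "\<lambda>mm x. if x \<in> I then mm (THE B. B \<in> \<alpha> \<and> x \<in> B) x else undefined"
      "\<lambda>m. \<lambda>A\<in>\<alpha>. restrict m A"])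
  have UI: "\<Union>\<alpha> = I" using pa by (simp add: partition_on_def)
  have sub: "A \<subseteq> I" if "A \<in> \<alpha>" for A using UI that by auto
  have ex: "\<exists>A\<in>\<alpha>. x \<in> A" if "x \<in> I" for x using UI that by auto
  have finA: "finite A" if "A \<in> \<alpha>" for A using sub[OF that] finI by (rule finite_subset)
  have fa: "finite \<alpha>" using finite_elements[OF finI pa] .
  fix m assume m: "m \<in> {m\<in>PiE I (\<lambda>_. UNIV). (\<Sum>A\<in>\<alpha>. Cm N A m) = r}"
  show "(\<lambda>x. if x \<in> I then (\<lambda>A\<in>\<alpha>. restrict m A) (THE B. B \<in> \<alpha> \<and> x \<in> B) x else undefined) = m"
  proof
    fix x show "(if x \<in> I then (\<lambda>A\<in>\<alpha>. restrict m A) (THE B. B \<in> \<alpha> \<and> x \<in> B) x else undefined) = m x"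
    proof (cases "x \<in> I")
      case True
      then obtain A where "A \<in> \<alpha>" "x \<in> A" using ex by blast
      thus ?thesis using THE_block[OF pa] True by simp
    qed (use m in auto)
  qed
  have cm: "(\<Sum>A\<in>\<alpha>. Cm N A (restrict m A)) = (\<Sum>A\<in>\<alpha>. Cm N A m)"
    by (intro sum.cong refl Cm_cong) auto
  show "(\<lambda>A\<in>\<alpha>. restrict m A) \<in> {mm\<in>PiE \<alpha> (\<lambda>A. PiE A (\<lambda>_. UNIV::int set)). (\<Sum>A\<in>\<alpha>. Cm N A (mm A)) = r}"
    using m cm by auto
  have "(\<Prod>A\<in>\<alpha>. \<Prod>a\<in>A. \<zeta> a powi (\<lambda>A\<in>\<alpha>. restrict m A) A a) = (\<Prod>A\<in>\<alpha>. \<Prod>a\<in>A. \<zeta> a powi m a)"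
    by (intro prod.cong refl) auto
  also have "\<dots> = (\<Prod>j\<in>\<Union>\<alpha>. \<zeta> j powi m j)"
    using pa finA unfolding partition_on_def disjoint_def disjnt_def
    by (subst prod.Union_disjoint) (auto simp: comp_def)
  finally show "(\<Prod>A\<in>\<alpha>. \<Prod>a\<in>A. \<zeta> a powi (\<lambda>A\<in>\<alpha>. restrict m A) A a) = (\<Prod>j\<in>I. \<zeta> j powi m j)"
    using UI by simp
next
  have UI: "\<Union>\<alpha> = I" using pa by (simp add: partition_on_def)
  have sub: "A \<subseteq> I" if "A \<in> \<alpha>" for A using UI that by auto
  fix mm assume mm: "mm \<in> {mm\<in>PiE \<alpha> (\<lambda>A. PiE A (\<lambda>_. UNIV::int set)). (\<Sum>A\<in>\<alpha>. Cm N A (mm A)) = r}"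
  define m where "m = (\<lambda>x. if x \<in> I then mm (THE B. B \<in> \<alpha> \<and> x \<in> B) x else undefined)"
  have mA: "m x = mm A x" if "A \<in> \<alpha>" "x \<in> A" for A x
    using that sub THE_block[OF pa that] by (auto simp: m_def)
  show "(\<lambda>A\<in>\<alpha>. restrict m A) = mm"
  proof
    fix A show "(\<lambda>A\<in>\<alpha>. restrict m A) A = mm A"
    proof (cases "A \<in> \<alpha>")
      case True
      show ?thesis
      proof
        fix x show "(\<lambda>A\<in>\<alpha>. restrict m A) A x = mm A x"
          using True mA mm by (cases "x \<in> A") (auto simp: PiE_iff extensional_def)
      qed
    qed (use mm in \<open>auto simp: PiE_iff extensional_def\<close>)
  qed
  have "(\<Sum>A\<in>\<alpha>. Cm N A m) = (\<Sum>A\<in>\<alpha>. Cm N A (mm A))"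
    by (intro sum.cong refl Cm_cong) (auto simp: mA)
  thus "m \<in> {m\<in>PiE I (\<lambda>_. UNIV). (\<Sum>A\<in>\<alpha>. Cm N A m) = r}"
    using mm by (auto simp: m_def PiE_iff extensional_def)
qed


lemma Kset_uminus: "(- k) \<in> Kset r \<longleftrightarrow> k \<in> Kset r"
  by (simp add: Kset_def)

lemma inKset: "N \<ge> 1 \<Longrightarrow> N * nat \<bar>k\<bar> \<le> count r (nat \<bar>k\<bar>) \<Longrightarrow> k \<in> Kset r"
proof (cases "k = 0")
  case False
  assume "N \<ge> 1" "N * nat \<bar>k\<bar> \<le> count r (nat \<bar>k\<bar>)"
  moreover have "nat \<bar>k\<bar> \<ge> 1" using False by simp
  ultimately have "count r (nat \<bar>k\<bar>) > 0"
    by (metis dual_order.strict_trans2 less_one mult_eq_0_iff not_gr0 not_le)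
  thus ?thesis by (simp add: Kset_def)
qed (simp add: Kset_def)

lemma umon_eq: "umon k (int M * k) = replicate_mset (M * nat \<bar>k\<bar>) (nat \<bar>k\<bar>)"
proof -
  have s: "sgn k * (int M * k) = int M * \<bar>k\<bar>"
    by (cases "k > 0"; cases "k = 0") (auto simp: sgn_if)
  have e: "nat (sgn k * (int M * k)) = M * nat \<bar>k\<bar>"
    unfolding s by (simp add: nat_mult_distrib)
  show ?thesis unfolding umon_def e ..
qed

lemma Kset_split:
  "Kset r = insert 0 ({k\<in>Kset r. 0 < k} \<union> uminus ` {k\<in>Kset r. 0 < k})"
proof (intro set_eqI iffI)
  fix k assume k: "k \<in> Kset r"
  show "k \<in> insert 0 ({k\<in>Kset r. 0 < k} \<union> uminus ` {k\<in>Kset r. 0 < k})"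
  proof (cases "k < 0")
    case True
    hence "-k \<in> {k\<in>Kset r. 0 < k}" using k Kset_uminus by auto
    hence "- (-k) \<in> uminus ` {k\<in>Kset r. 0 < k}" by blast
    thus ?thesis by simp
  qed (use k in auto)
qed (auto simp: Kset_def)

lemma sum_Kset_sym:
  fixes g :: "int \<Rightarrow> complex"
  shows "(\<Sum>k\<in>Kset r. g k) = g 0 + (\<Sum>k\<in>{k\<in>Kset r. 0 < k}. g k + g (- k))"
proof -
  let ?K = "{k\<in>Kset r. 0 < k}"
  have fK: "finite ?K" using finite_Kset by simp
  have "(\<Sum>k\<in>Kset r. g k) = g 0 + (\<Sum>k\<in>?K \<union> uminus ` ?K. g k)"
    by (subst Kset_split, subst sum.insert) (auto simp: fK)
  also have "(\<Sum>k\<in>?K \<union> uminus ` ?K. g k) = (\<Sum>k\<in>?K. g k) + (\<Sum>k\<in>uminus ` ?K. g k)"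
    by (rule sum.union_disjoint) (auto simp: fK)
  also have "(\<Sum>k\<in>uminus ` ?K. g k) = (\<Sum>k\<in>?K. g (- k))"
    by (subst sum.reindex) (auto simp: inj_on_def)
  finally show ?thesis by (simp add: sum.distrib)
qed

lemma rhs_ssum:
  fixes Pk :: "int \<Rightarrow> complex"
  assumes M: "M \<ge> 1"
  shows "ssum (\<lambda>m::int. \<lambda>r'. mono (umon m (int M * m)) r' * Pk m) UNIV r =
    (\<Sum>k\<in>Kset r. if replicate_mset (M * nat \<bar>k\<bar>) (nat \<bar>k\<bar>) = r then Pk k else 0)"
proof -
  have "ssum (\<lambda>m::int. \<lambda>r'. mono (umon m (int M * m)) r' * Pk m) UNIV r
     = (\<Sum>\<^sub>\<infinity>k\<in>UNIV. if replicate_mset (M * nat \<bar>k\<bar>) (nat \<bar>k\<bar>) = r then Pk k else 0)"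
    unfolding ssum_def umon_eq mono_def by (intro infsum_cong) auto
  also have "\<dots> = (\<Sum>\<^sub>\<infinity>k\<in>Kset r. if replicate_mset (M * nat \<bar>k\<bar>) (nat \<bar>k\<bar>) = r then Pk k else 0)"
  proof (rule infsum_cong_neutral)
    fix k assume "k \<in> UNIV - Kset r"
    hence k: "k \<noteq> 0" "nat \<bar>k\<bar> \<notin># r" by (auto simp: Kset_def)
    have "nat \<bar>k\<bar> \<ge> 1" using k(1) by simp
    hence "M * nat \<bar>k\<bar> \<ge> 1" using M by (simp add: one_le_mult_iff)
    hence "nat \<bar>k\<bar> \<in># replicate_mset (M * nat \<bar>k\<bar>) (nat \<bar>k\<bar>)" using k(1) by simp
    thus "(if replicate_mset (M * nat \<bar>k\<bar>) (nat \<bar>k\<bar>) = r then Pk k else 0) = 0" using k by auto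
  qed auto
  also have "\<dots> = (\<Sum>k\<in>Kset r. if replicate_mset (M * nat \<bar>k\<bar>) (nat \<bar>k\<bar>) = r then Pk k else 0)"
    by (simp add: finite_Kset)
  finally show ?thesis .
qed

lemma set_partitions_facts:
  assumes "\<alpha> \<in> set_partitions l"
  shows "partition_on {1..l} \<alpha>" "finite \<alpha>" "\<And>A. A \<in> \<alpha> \<Longrightarrow> A \<subseteq> {1..l}"
    "\<And>A. A \<in> \<alpha> \<Longrightarrow> finite A" "\<And>A. A \<in> \<alpha> \<Longrightarrow> A \<noteq> {}"
proof -
  show pa: "partition_on {1..l} \<alpha>" using assms by (simp add: set_partitions_def)
  show "finite \<alpha>" using finite_elements[OF _ pa] by simp
  show sub: "A \<subseteq> {1..l}" if "A \<in> \<alpha>" for A using pa that by (auto simp: partition_on_def)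
  show "finite A" if "A \<in> \<alpha>" for A using sub[OF that] by (rule finite_subset) simp
  show "A \<noteq> {}" if "A \<in> \<alpha>" for A using pa that by (auto simp: partition_on_def)
qed

lemma sprod_main:
  assumes a: "\<alpha> \<in> set_partitions l" and N: "\<And>a. a \<in> {1..l} \<Longrightarrow> N a \<ge> 1"
  shows "sprod (\<lambda>A. ubracket (\<lambda>lam. \<Prod>a\<in>A. t_N (N a) (\<zeta> a) lam)) \<alpha> r =
    (\<Sum>m\<in>{m\<in>PiE {1..l} (\<lambda>_. UNIV). (\<Sum>A\<in>\<alpha>. Cm N A m) = r}. \<Prod>j\<in>{1..l}. \<zeta> j powi m j)"
proof -
  note sp = set_partitions_facts[OF a]
  have NA: "\<And>a. a \<in> A \<Longrightarrow> N a \<ge> 1" if "A \<in> \<alpha>" for A using sp(3)[OF that] N by blast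
  have "sprod (\<lambda>A. ubracket (\<lambda>lam. \<Prod>a\<in>A. t_N (N a) (\<zeta> a) lam)) \<alpha> r =
        sprod (\<lambda>A. fam (\<lambda>m. \<Prod>a\<in>A. \<zeta> a powi m a) (Cm N A) (PiE A (\<lambda>_. UNIV))) \<alpha> r"
  proof -
    have "ubracket (\<lambda>lam. \<Prod>a\<in>A. t_N (N a) (\<zeta> a) lam) = fam (\<lambda>m. \<Prod>a\<in>A. \<zeta> a powi m a) (Cm N A) (PiE A (\<lambda>_. UNIV))"
      if "A \<in> \<alpha>" for A by (rule ubracket_prod_t[OF sp(4)[OF that] NA[OF that]])
    hence "sprod (\<lambda>A. ubracket (\<lambda>lam. \<Prod>a\<in>A. t_N (N a) (\<zeta> a) lam)) \<alpha> =
        sprod (\<lambda>A. fam (\<lambda>m. \<Prod>a\<in>A. \<zeta> a powi m a) (Cm N A) (PiE A (\<lambda>_. UNIV))) \<alpha>"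
      by (rule sprod_cong)
    thus ?thesis by simp
  qed
  also have "\<dots> = (\<Sum>mm\<in>{mm\<in>PiE \<alpha> (\<lambda>A. PiE A (\<lambda>_. UNIV::int set)). (\<Sum>A\<in>\<alpha>. Cm N A (mm A)) = r}.
             \<Prod>A\<in>\<alpha>. \<Prod>a\<in>A. \<zeta> a powi mm A a)"
  proof (rule sprod_fam[OF sp(2)])
    fix A x assume A: "A \<in> \<alpha>"
    show "finite {i\<in>PiE A (\<lambda>_. UNIV). Cm N A i = x}"
      by (rule finite_subset[OF _ finite_Cm_sub[OF sp(4)[OF A] NA[OF A], where lam=x]]) auto
  qed
  also have "\<dots> = (\<Sum>m\<in>{m\<in>PiE {1..l} (\<lambda>_. UNIV). (\<Sum>A\<in>\<alpha>. Cm N A m) = r}. \<Prod>j\<in>{1..l}. \<zeta> j powi m j)"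
    by (rule sum_glue[OF sp(1)]) simp
  finally show ?thesis .
qed


definition Phi :: "(nat \<Rightarrow> nat) \<Rightarrow> nat \<Rightarrow> nat multiset \<Rightarrow> (nat \<Rightarrow> int) \<Rightarrow> complex" where
  "Phi N l r m = (\<Sum>\<alpha>\<in>set_partitions l. of_int (ww (card \<alpha>)) * (if (\<Sum>A\<in>\<alpha>. Cm N A m) = r then 1 else 0))"

definition PhiK :: "(nat \<Rightarrow> nat) \<Rightarrow> nat \<Rightarrow> nat multiset \<Rightarrow> int \<Rightarrow> complex" where
  "PhiK N l r k = (\<Sum>\<alpha>\<in>set_partitions l. of_int (ww (card \<alpha>)) *
      (if replicate_mset (Mexp N \<alpha> * nat \<bar>k\<bar>) (nat \<bar>k\<bar>) = r then 1 else 0))"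

lemma finite_set_partitions: "finite (set_partitions l)"
  unfolding set_partitions_def by (rule finitely_many_partition_on) simp

lemma lhs_coeff:
  assumes N: "\<And>a. a \<in> {1..l} \<Longrightarrow> N a \<ge> 1"
  shows "cbracket l (\<lambda>a. t_N (N a) (\<zeta> a)) r =
     (\<Sum>m\<in>PiE {1..l} (\<lambda>_. Kset r). (\<Prod>j\<in>{1..l}. \<zeta> j powi m j) * Phi N l r m)"
proof -
  define W where "W = PiE {1..l} (\<lambda>_. Kset r)"
  define Z where "Z = (\<lambda>m. \<Prod>j\<in>{1..l}. \<zeta> j powi m j)"
  have finW: "finite W" unfolding W_def by (intro finite_PiE finite_Kset) simp
  have setW: "{m\<in>PiE {1..l} (\<lambda>_. UNIV). (\<Sum>A\<in>\<alpha>. Cm N A m) = r} = {m\<in>W. (\<Sum>A\<in>\<alpha>. Cm N A m) = r}"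
    if a: "\<alpha> \<in> set_partitions l" for \<alpha>
  proof -
    note sp = set_partitions_facts[OF a]
    have "m j \<in> Kset r" if m: "(\<Sum>A\<in>\<alpha>. Cm N A m) = r" and j: "j \<in> {1..l}" for m j
    proof -
      obtain A where A: "A \<in> \<alpha>" "j \<in> A" using sp(1) j unfolding partition_on_def by blast
      have "Cm N A m \<subseteq># r" using sum_mset_sub[OF sp(2) A(1), of "\<lambda>A. Cm N A m"] m by simp
      hence "N j * nat \<bar>m j\<bar> \<le> count r (nat \<bar>m j\<bar>)" using Cm_sub[OF sp(4)[OF A(1)]] A(2) by blast
      thus ?thesis using N[OF j] by (rule inKset[rotated])
    qed
    thus ?thesis unfolding W_def by (auto simp: PiE_iff)
  qed
  have "cbracket l (\<lambda>a. t_N (N a) (\<zeta> a)) r =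
     (\<Sum>\<alpha>\<in>set_partitions l. of_int (ww (card \<alpha>)) * (\<Sum>m\<in>{m\<in>W. (\<Sum>A\<in>\<alpha>. Cm N A m) = r}. Z m))"
    unfolding cbracket_def
  proof (intro sum.cong refl)
    fix \<alpha> assume a: "\<alpha> \<in> set_partitions l"
    show "of_int (mobius \<alpha> {{1..l}}) * sprod (\<lambda>A. ubracket (\<lambda>lam. \<Prod>a\<in>A. t_N (N a) (\<zeta> a) lam)) \<alpha> r =
      of_int (ww (card \<alpha>)) * (\<Sum>m\<in>{m\<in>W. (\<Sum>A\<in>\<alpha>. Cm N A m) = r}. Z m)"
      unfolding Z_def by (simp only: mobius_ww[OF a] sprod_main[OF a N] setW[OF a])
  qed
  also have "\<dots> = (\<Sum>\<alpha>\<in>set_partitions l. \<Sum>m\<in>W. of_int (ww (card \<alpha>)) *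
        (if (\<Sum>A\<in>\<alpha>. Cm N A m) = r then Z m else 0))"
    by (intro sum.cong refl) (simp add: sum.inter_filter[OF finW] sum_distrib_left)
  also have "\<dots> = (\<Sum>m\<in>W. \<Sum>\<alpha>\<in>set_partitions l. of_int (ww (card \<alpha>)) *
        (if (\<Sum>A\<in>\<alpha>. Cm N A m) = r then Z m else 0))"
    by (rule sum.swap)
  also have "\<dots> = (\<Sum>m\<in>W. Z m * Phi N l r m)"
    unfolding Phi_def by (intro sum.cong refl) (auto simp: sum_distrib_left intro!: sum.cong)
  finally show ?thesis by (simp add: W_def Z_def)
qed

lemma Phi_vanish:
  assumes i: "i \<in> {1..l}" and j: "j \<in> {1..l}" and ne: "nat \<bar>m i\<bar> \<noteq> nat \<bar>m j\<bar>"
  shows "Phi N l r m = 0"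
proof -
  define P where "P = {x\<in>{1..l}. nat \<bar>m x\<bar> = nat \<bar>m i\<bar>}"
  have "(\<Sum>\<alpha>\<in>{\<alpha>. partition_on {1..l} \<alpha>}. of_int (ww (card \<alpha>)) *
           (\<lambda>x. if x = r then 1 else (0::complex)) (\<Sum>A\<in>\<alpha>. (\<lambda>A. Cm N A m) A)) = 0"
  proof (rule cumulant_vanish)
    show "P \<subseteq> {1..l}" by (auto simp: P_def)
    show "P \<noteq> {}" using i by (auto simp: P_def)
    show "{1..l} - P \<noteq> {}" using j ne by (auto simp: P_def)
    show "Cm N {} m = 0" by (simp add: Cm_empty)
    fix A assume A: "A \<subseteq> {1..l}"
    have fA: "finite A" using A by (rule finite_subset) simp
    have "P \<inter> A = A \<inter> {x. nat \<bar>m x\<bar> = nat \<bar>m i\<bar>}" "({1..l} - P) \<inter> A = A - {x. nat \<bar>m x\<bar> = nat \<bar>m i\<bar>}"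
      using A by (auto simp: P_def)
    thus "Cm N A m = Cm N (P \<inter> A) m + Cm N (({1..l} - P) \<inter> A) m"
      using Cm_split[OF fA, of N m "nat \<bar>m i\<bar>"] by simp
  qed simp
  thus ?thesis by (simp add: Phi_def set_partitions_def)
qed

lemma ww_sum_zero:
  assumes "l \<ge> 2"
  shows "(\<Sum>\<alpha>\<in>set_partitions l. of_int (ww (card \<alpha>)) :: complex) = 0"
proof -
  have "(\<Sum>\<alpha>\<in>{\<alpha>. partition_on {1..l} \<alpha>}. of_int (ww (card \<alpha>)) *
           (\<lambda>x::nat. 1::complex) (\<Sum>A\<in>\<alpha>. (\<lambda>A. 0::nat) A)) = 0"
  proof (rule cumulant_vanish[of _ "{1}"])
    have "2 \<in> {1..l} - {1}" using assms by auto
    thus "{1..l} - {1} \<noteq> {}" by blast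
  qed (use assms in auto)
  thus ?thesis by (simp add: set_partitions_def)
qed

lemma Phi_uniform:
  assumes m: "m \<in> PiE {1..l} (\<lambda>_. {k, -k})"
  shows "Phi N l r m = PhiK N l r k"
  unfolding Phi_def PhiK_def
proof (intro sum.cong refl)
  fix \<alpha> assume a: "\<alpha> \<in> set_partitions l"
  note sp = set_partitions_facts[OF a]
  have "(\<Sum>A\<in>\<alpha>. Cm N A m) = (\<Sum>A\<in>\<alpha>. replicate_mset (nat \<bar>k\<bar> * Max (N ` A)) (nat \<bar>k\<bar>))"
  proof (intro sum.cong refl Cm_uniform)
    fix A a assume "A \<in> \<alpha>" "a \<in> A"
    hence "a \<in> {1..l}" using sp(3) by blast
    thus "nat \<bar>m a\<bar> = nat \<bar>k\<bar>" using m by (auto simp: PiE_iff)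
  qed (use sp in auto)
  also have "\<dots> = replicate_mset (Mexp N \<alpha> * nat \<bar>k\<bar>) (nat \<bar>k\<bar>)"
    by (simp add: sum_replicate[OF sp(2)] Mexp_def sum_distrib_left mult.commute)
  finally show "of_int (ww (card \<alpha>)) * (if (\<Sum>A\<in>\<alpha>. Cm N A m) = r then 1 else 0) =
      of_int (ww (card \<alpha>)) * (if replicate_mset (Mexp N \<alpha> * nat \<bar>k\<bar>) (nat \<bar>k\<bar>) = r then 1 else 0)"
    by simp
qed

lemma sum_U:
  fixes l :: nat
  shows "(\<Sum>m\<in>PiE {1..l} (\<lambda>_. {k, -k}). \<Prod>j\<in>{1..l}. (\<zeta> j :: complex) powi m j) =
   (\<Prod>j\<in>{1..l}. \<Sum>x\<in>{k, -k}. \<zeta> j powi x)"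
  by (rule prod_sum_PiE[symmetric]) auto


lemma Mexp_ge1:
  assumes a: "\<alpha> \<in> set_partitions l" and l: "l \<ge> 1" and N: "\<And>a. a \<in> {1..l} \<Longrightarrow> N a \<ge> 1"
  shows "Mexp N \<alpha> \<ge> 1"
proof -
  note sp = set_partitions_facts[OF a]
  have "1 \<in> {1..l}" using l by simp
  then obtain A where A: "A \<in> \<alpha>" "1 \<in> A" using sp(1) unfolding partition_on_def by blast
  have "1 \<le> N 1" using N l by simp
  also have "\<dots> \<le> Max (N ` A)" using sp(4)[OF A(1)] A(2) by (intro Max_ge) auto
  also have "\<dots> \<le> Mexp N \<alpha>" unfolding Mexp_def using sp(2) A(1) by (intro member_le_sum) auto
  finally show ?thesis .
qed

lemma lhs_final:
  assumes l: "l \<ge> 1" and N: "\<And>a. a \<in> {1..l} \<Longrightarrow> N a \<ge> 1"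
  shows "cbracket l (\<lambda>a. t_N (N a) (\<zeta> a)) r =
    PhiK N l r 0 + (\<Sum>k\<in>{k\<in>Kset r. 0 < k}. PhiK N l r k * (\<Prod>j\<in>{1..l}. \<zeta> j powi k + \<zeta> j powi (-k)))"
proof -
  define W where "W = PiE {1..l} (\<lambda>_. Kset r)"
  define Z where "Z = (\<lambda>m. \<Prod>j\<in>{1..l}. \<zeta> j powi m j)"
  define U where "U = (\<lambda>k::int. PiE {1..l} (\<lambda>_. {k, -k}))"
  define Kp where "Kp = {k\<in>Kset r. 0 \<le> k}"
  have finW: "finite W" unfolding W_def by (intro finite_PiE finite_Kset) simp
  have finKp: "finite Kp" unfolding Kp_def using finite_Kset by simp
  have finU: "finite (U k)" for k unfolding U_def by (intro finite_PiE) auto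
  have one: "1 \<in> {1..l}" using l by simp
  have UW: "(\<Union>k\<in>Kp. U k) \<subseteq> W"
  proof
    fix m assume "m \<in> (\<Union>k\<in>Kp. U k)"
    then obtain k where k: "k \<in> Kset r" "m \<in> U k" unfolding Kp_def by blast
    have "{k, -k} \<subseteq> Kset r" using k(1) Kset_uminus by auto
    thus "m \<in> W" using k(2) unfolding U_def W_def by (auto simp: PiE_iff)
  qed
  have zero: "Z m * Phi N l r m = 0" if m: "m \<in> W - (\<Union>k\<in>Kp. U k)" for m
  proof -
    have "\<exists>i\<in>{1..l}. \<exists>j\<in>{1..l}. nat \<bar>m i\<bar> \<noteq> nat \<bar>m j\<bar>"
    proof (rule ccontr)
      assume "\<not> ?thesis"
      hence eq: "nat \<bar>m j\<bar> = nat \<bar>m 1\<bar>" if "j \<in> {1..l}" for j using that one by blast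
      define k where "k = \<bar>m 1\<bar>"
      have "m 1 \<in> Kset r" using m one by (auto simp: W_def PiE_iff)
      hence "k \<in> Kp" by (auto simp: Kp_def k_def Kset_def)
      moreover have "m \<in> U k"
      proof -
        have "m j \<in> {k, -k}" if "j \<in> {1..l}" for j
          using eq[OF that] by (auto simp: k_def abs_if split: if_splits)
        moreover have "m \<in> extensional {1..l}" using m by (auto simp: W_def PiE_iff)
        ultimately show ?thesis by (auto simp: U_def PiE_iff)
      qed
      ultimately show False using m by blast
    qed
    then obtain i j where "i \<in> {1..l}" "j \<in> {1..l}" "nat \<bar>m i\<bar> \<noteq> nat \<bar>m j\<bar>" by blast
    thus ?thesis using Phi_vanish by simp
  qed
  have "cbracket l (\<lambda>a. t_N (N a) (\<zeta> a)) r = (\<Sum>m\<in>W. Z m * Phi N l r m)"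
    unfolding W_def Z_def by (rule lhs_coeff[OF N])
  also have "\<dots> = (\<Sum>m\<in>(\<Union>k\<in>Kp. U k). Z m * Phi N l r m)"
    by (rule sum.mono_neutral_right[OF finW UW]) (use zero in blast)
  also have "\<dots> = (\<Sum>k\<in>Kp. \<Sum>m\<in>U k. Z m * Phi N l r m)"
  proof (rule sum.UNION_disjoint[OF finKp])
    show "\<forall>k\<in>Kp. finite (U k)" using finU by blast
    show "\<forall>k\<in>Kp. \<forall>k'\<in>Kp. k \<noteq> k' \<longrightarrow> U k \<inter> U k' = {}"
    proof (intro ballI impI)
      fix k k' assume kk: "k \<in> Kp" "k' \<in> Kp" "k \<noteq> k'"
      show "U k \<inter> U k' = {}"
      proof (rule ccontr)
        assume "U k \<inter> U k' \<noteq> {}"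
        then obtain m where "m \<in> U k" "m \<in> U k'" by blast
        hence "m 1 \<in> {k, -k}" "m 1 \<in> {k', -k'}" using one by (auto simp: U_def PiE_iff)
        thus False using kk by (auto simp: Kp_def)
      qed
    qed
  qed
  also have "\<dots> = (\<Sum>k\<in>Kp. PhiK N l r k * (\<Prod>j\<in>{1..l}. \<Sum>x\<in>{k, -k}. \<zeta> j powi x))"
  proof (intro sum.cong refl)
    fix k assume "k \<in> Kp"
    have "(\<Sum>m\<in>U k. Z m * Phi N l r m) = (\<Sum>m\<in>U k. PhiK N l r k * Z m)"
      by (intro sum.cong refl) (simp add: Phi_uniform U_def)
    also have "\<dots> = PhiK N l r k * (\<Sum>m\<in>U k. Z m)"
      by (simp add: sum_distrib_left)
    also have "(\<Sum>m\<in>U k. Z m) = (\<Prod>j\<in>{1..l}. \<Sum>x\<in>{k, -k}. \<zeta> j powi x)"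
      unfolding U_def Z_def by (rule sum_U)
    finally show "(\<Sum>m\<in>U k. Z m * Phi N l r m) = PhiK N l r k * (\<Prod>j\<in>{1..l}. \<Sum>x\<in>{k, -k}. \<zeta> j powi x)" .
  qed
  also have "Kp = insert 0 {k\<in>Kset r. 0 < k}" by (auto simp: Kp_def Kset_def)
  also have "(\<Sum>k\<in>insert 0 {k\<in>Kset r. 0 < k}. PhiK N l r k * (\<Prod>j\<in>{1..l}. \<Sum>x\<in>{k, -k}. \<zeta> j powi x))
      = PhiK N l r 0 + (\<Sum>k\<in>{k\<in>Kset r. 0 < k}. PhiK N l r k * (\<Prod>j\<in>{1..l}. \<Sum>x\<in>{k, -k}. \<zeta> j powi x))"
    using finite_Kset[of r] by (subst sum.insert) auto
  also have "(\<Sum>k\<in>{k\<in>Kset r. 0 < k}. PhiK N l r k * (\<Prod>j\<in>{1..l}. \<Sum>x\<in>{k, -k}. \<zeta> j powi x))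
      = (\<Sum>k\<in>{k\<in>Kset r. 0 < k}. PhiK N l r k * (\<Prod>j\<in>{1..l}. \<zeta> j powi k + \<zeta> j powi (-k)))"
    by (intro sum.cong refl) auto
  finally show ?thesis .
qed


lemma rhs_final:
  assumes l: "l \<ge> 1" and N: "\<And>a. a \<in> {1..l} \<Longrightarrow> N a \<ge> 1"
  shows "(1/2) * (\<Sum>\<alpha>\<in>set_partitions l. of_int (mobius \<alpha> {{1..l}}) *
        ssum (\<lambda>m::int. \<lambda>r'. mono (umon m (int (Mexp N \<alpha>) * m)) r' *
                (\<Prod>j\<in>{1..l}. \<zeta> j powi m + \<zeta> j powi (-m))) UNIV r)
    = (2 ^ l / 2) * PhiK N l r 0 + (\<Sum>k\<in>{k\<in>Kset r. 0 < k}. PhiK N l r k * (\<Prod>j\<in>{1..l}. \<zeta> j powi k + \<zeta> j powi (-k)))"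
proof -
  define Pk where "Pk = (\<lambda>k::int. \<Prod>j\<in>{1..l}. \<zeta> j powi k + \<zeta> j powi (-k))"
  define G where "G = (\<lambda>\<alpha> k. if replicate_mset (Mexp N \<alpha> * nat \<bar>k\<bar>) (nat \<bar>k\<bar>) = r then Pk k else 0)"
  define Kpos where "Kpos = {k\<in>Kset r. 0 < k}"
  define I1 where "I1 = (\<lambda>\<alpha>. if replicate_mset (Mexp N \<alpha> * 0) 0 = r then (1::complex) else 0)"
  have Pk_sym: "Pk (-k) = Pk k" for k unfolding Pk_def by (intro prod.cong refl) simp
  have Pk0: "Pk 0 = 2 ^ l" unfolding Pk_def by simp
  have finK: "finite Kpos" unfolding Kpos_def using finite_Kset by simp
  have A: "of_int (mobius \<alpha> {{1..l}}) *
        ssum (\<lambda>m::int. \<lambda>r'. mono (umon m (int (Mexp N \<alpha>) * m)) r' *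
                (\<Prod>j\<in>{1..l}. \<zeta> j powi m + \<zeta> j powi (-m))) UNIV r
      = of_int (ww (card \<alpha>)) * (2 ^ l * I1 \<alpha> + 2 * (\<Sum>k\<in>Kpos. G \<alpha> k))"
    if a: "\<alpha> \<in> set_partitions l" for \<alpha>
  proof -
    have e: "(\<lambda>m::int. \<lambda>r'. mono (umon m (int (Mexp N \<alpha>) * m)) r' *
                (\<Prod>j\<in>{1..l}. \<zeta> j powi m + \<zeta> j powi (-m))) =
             (\<lambda>m r'. mono (umon m (int (Mexp N \<alpha>) * m)) r' * Pk m)"
      by (simp add: Pk_def)
    have "ssum (\<lambda>m::int. \<lambda>r'. mono (umon m (int (Mexp N \<alpha>) * m)) r' * Pk m) UNIV r
        = (\<Sum>k\<in>Kset r. G \<alpha> k)"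
      unfolding G_def by (rule rhs_ssum[OF Mexp_ge1[OF a l N]])
    also have "\<dots> = G \<alpha> 0 + (\<Sum>k\<in>Kpos. G \<alpha> k + G \<alpha> (-k))"
      unfolding Kpos_def by (rule sum_Kset_sym)
    also have "(\<Sum>k\<in>Kpos. G \<alpha> k + G \<alpha> (-k)) = 2 * (\<Sum>k\<in>Kpos. G \<alpha> k)"
    proof -
      have "G \<alpha> (-k) = G \<alpha> k" for k unfolding G_def by (simp only: Pk_sym abs_minus_cancel)
      hence "(\<Sum>k\<in>Kpos. G \<alpha> k + G \<alpha> (-k)) = (\<Sum>k\<in>Kpos. 2 * G \<alpha> k)"
        by (intro sum.cong refl) (simp only: mult_2)
      thus ?thesis by (simp only: sum_distrib_left)
    qed
    also have "G \<alpha> 0 = 2 ^ l * I1 \<alpha>" by (simp add: G_def I1_def Pk0)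
    finally show ?thesis unfolding e mobius_ww[OF a] by simp
  qed
  have "(1/2) * (\<Sum>\<alpha>\<in>set_partitions l. of_int (mobius \<alpha> {{1..l}}) *
        ssum (\<lambda>m::int. \<lambda>r'. mono (umon m (int (Mexp N \<alpha>) * m)) r' *
                (\<Prod>j\<in>{1..l}. \<zeta> j powi m + \<zeta> j powi (-m))) UNIV r)
     = (1/2) * (\<Sum>\<alpha>\<in>set_partitions l. of_int (ww (card \<alpha>)) * (2 ^ l * I1 \<alpha> + 2 * (\<Sum>k\<in>Kpos. G \<alpha> k)))"
    by (intro arg_cong[where f="\<lambda>x. (1/2) * x"] sum.cong refl A)
  also have "\<dots> = (1/2) * (2 ^ l * (\<Sum>\<alpha>\<in>set_partitions l. of_int (ww (card \<alpha>)) * I1 \<alpha>)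
      + 2 * (\<Sum>\<alpha>\<in>set_partitions l. \<Sum>k\<in>Kpos. of_int (ww (card \<alpha>)) * G \<alpha> k))"
  proof -
    have pw: "of_int (ww (card \<alpha>)) * (2 ^ l * I1 \<alpha> + 2 * (\<Sum>k\<in>Kpos. G \<alpha> k)) =
       2 ^ l * (of_int (ww (card \<alpha>)) * I1 \<alpha>) + 2 * (\<Sum>k\<in>Kpos. of_int (ww (card \<alpha>)) * G \<alpha> k)" for \<alpha>
      by (simp add: ring_distribs sum_distrib_left mult.left_commute)
    show ?thesis by (simp only: pw sum.distrib sum_distrib_left[symmetric])
  qed
  also have "\<dots> = (2 ^ l / 2) * (\<Sum>\<alpha>\<in>set_partitions l. of_int (ww (card \<alpha>)) * I1 \<alpha>)
      + (\<Sum>\<alpha>\<in>set_partitions l. \<Sum>k\<in>Kpos. of_int (ww (card \<alpha>)) * G \<alpha> k)"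
  proof -
    have "(1/2::complex) * (a * X + 2 * Y) = a / 2 * X + Y" for a X Y by (simp add: field_simps)
    thus ?thesis .
  qed
  also have "(\<Sum>\<alpha>\<in>set_partitions l. \<Sum>k\<in>Kpos. of_int (ww (card \<alpha>)) * G \<alpha> k)
      = (\<Sum>k\<in>Kpos. \<Sum>\<alpha>\<in>set_partitions l. of_int (ww (card \<alpha>)) * G \<alpha> k)"
    by (rule sum.swap)
  also have "\<dots> = (\<Sum>k\<in>Kpos. PhiK N l r k * Pk k)"
    unfolding PhiK_def G_def by (intro sum.cong refl) (auto simp: sum_distrib_right intro!: sum.cong)
  also have "(\<Sum>\<alpha>\<in>set_partitions l. of_int (ww (card \<alpha>)) * I1 \<alpha>) = PhiK N l r 0"
    unfolding PhiK_def I1_def by simp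
  finally show ?thesis by (simp add: Kpos_def Pk_def)
qed

theorem mainTheorem4:
  fixes l :: nat and N :: "nat \<Rightarrow> nat" and \<zeta> :: "nat \<Rightarrow> complex"
  assumes "l \<ge> 1"
    and "\<And>a. a \<in> {1..l} \<Longrightarrow> N a \<ge> 1"
    and "\<And>a. a \<in> {1..l} \<Longrightarrow> \<zeta> a \<noteq> 0"
  shows "cbracket l (\<lambda>a. t_N (N a) (\<zeta> a)) =
    (\<lambda>r. (1/2) * (\<Sum>\<alpha>\<in>set_partitions l. of_int (mobius \<alpha> {{1..l}}) *
        ssum (\<lambda>m::int. \<lambda>r'. mono (umon m (int (Mexp N \<alpha>) * m)) r' *
                (\<Prod>j\<in>{1..l}. \<zeta> j powi m + \<zeta> j powi (-m))) UNIV r))"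
proof (rule ext)
  fix r
  have z: "PhiK N l r 0 = (2 ^ l / 2) * PhiK N l r 0"
  proof (cases "l = 1")
    case False
    hence "l \<ge> 2" using assms(1) by simp
    have "PhiK N l r 0 = (if {#} = r then (\<Sum>\<alpha>\<in>set_partitions l. of_int (ww (card \<alpha>))) else 0)"
      unfolding PhiK_def by simp
    also have "\<dots> = 0" using ww_sum_zero[OF \<open>l \<ge> 2\<close>] by simp
    finally show ?thesis by simp
  qed simp
  show "cbracket l (\<lambda>a. t_N (N a) (\<zeta> a)) r =
    (1/2) * (\<Sum>\<alpha>\<in>set_partitions l. of_int (mobius \<alpha> {{1..l}}) *
        ssum (\<lambda>m::int. \<lambda>r'. mono (umon m (int (Mexp N \<alpha>) * m)) r' *
                (\<Prod>j\<in>{1..l}. \<zeta> j powi m + \<zeta> j powi (-m))) UNIV r)"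
  proof -
    have L: "cbracket l (\<lambda>a. t_N (N a) (\<zeta> a)) r =
      PhiK N l r 0 + (\<Sum>k\<in>{k\<in>Kset r. 0 < k}. PhiK N l r k * (\<Prod>j\<in>{1..l}. \<zeta> j powi k + \<zeta> j powi (-k)))"
      by (rule lhs_final[OF assms(1,2)])
    also have "\<dots> = (2 ^ l / 2) * PhiK N l r 0 + (\<Sum>k\<in>{k\<in>Kset r. 0 < k}. PhiK N l r k * (\<Prod>j\<in>{1..l}. \<zeta> j powi k + \<zeta> j powi (-k)))"
      using z by (rule arg_cong[where f="\<lambda>x. x + _"])
    also have "\<dots> = (1/2) * (\<Sum>\<alpha>\<in>set_partitions l. of_int (mobius \<alpha> {{1..l}}) *
        ssum (\<lambda>m::int. \<lambda>r'. mono (umon m (int (Mexp N \<alpha>) * m)) r' *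
                (\<Prod>j\<in>{1..l}. \<zeta> j powi m + \<zeta> j powi (-m))) UNIV r)"
      by (rule rhs_final[OF assms(1,2), symmetric])
    finally show ?thesis .
  qed
qed


end
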